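(* Let $N\ge1$, consider the fuzzy sphere calculus described in the context with basis one-forms $e_k=1\otimes\sigma_k$ and basis two-forms $f_m=\tfrac12\sum_{j,k}\epsilon_{mjk}\,e_j\wedge e_k$, and let $\nabla$ be the connection with $\nabla(e_k)=\sum_je_j\otimes_{A_N}\omega_{jk}$, $\omega_{jk}=-\tfrac12\sum_l\epsilon_{jkl}e_l$. Define its curvature on the basis by $$R_\nabla(e_j)=\sum_k\Big[(\mathrm{id}\otimes\wedge)\big(\nabla(e_k)\otimes_{A_N}\omega_{kj}\big)+e_k\otimes_{A_N}d\omega_{kj}\Big]\in\mathcal{E}\otimes_{A_N}\Omega^2(A_N).$$ Then $$R_\nabla(e_j)=-\tfrac14\sum_{p,q}\epsilon_{jpq}\,e_p\otimes_{A_N}f_q=\tfrac14\sum_pe_p\otimes_{A_N}(e_p\wedge e_j).$$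
   Context: Fuzzy sphere spectral triple: $J_1,J_2,J_3$ basis of $su(2)$ with $[J_k,J_l]=\sum_m\epsilon_{klm}J_m$ ($\epsilon_{123}=1$, totally antisymmetric); $\rho_{n/2}$ the $(n+1)$-dimensional irreducible unitary representation; $K_N=\oplus_{n=0}^N\mathbb{C}^{n+1}$, $X_k=\oplus_{n=0}^N\rho_{n/2}(J_k)$, $A_N=B(K_N)$, $H_N=K_N\otimes\mathbb{C}^2$ with $a\mapsto a\otimes1$, $\sigma_k=\sqrt{-1}\tau_k$ ($\tau_k$ Pauli matrices), $D_N=\sum_kX_k\otimes\sigma_k$. Differential calculus: $\mathcal{E}=\Omega^1(A_N)=\{\sum a_j[D_N,b_j]\}$ (free with basis $e_1,e_2,e_3$), $da=[D_N,a]$; $\Omega^2(A_N)=\mathcal{S}/J^2$ with $\mathcal{S}$ the span of $a_0[D_N,a_1][D_N,a_2]$ and $J^2=\{\sum_j[D_N,a_j][D_N,b_j]:\sum_ja_j[D_N,b_j]=0\}$; $\wedge$ is operator multiplication followed by the quotient; $d(\sum a_j[D_N,b_j])=[\sum_j[D_N,a_j][D_N,b_j]]$. $(\mathrm{id}\otimes\wedge)(x\otimes y\otimes z)=x\otimes(y\wedge z)$. (This $\nabla$ is the Levi-Civita connection of the metric $g(e_k\otimes e_j)=\delta_{kj}$.) *)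

theory Defs
  imports Complex_Main "Jordan_Normal_Form.Matrix"
begin

text \<open>Indices k of the basis J_1, J_2, J_3 of su(2) are the naturals 1, 2, 3.\<close>

definition eps :: "nat \<Rightarrow> nat \<Rightarrow> nat \<Rightarrow> complex" where
  "eps i j k =
     (if (i,j,k) \<in> {(1,2,3),(2,3,1),(3,1,2)} then 1
      else if (i,j,k) \<in> {(1,3,2),(3,2,1),(2,1,3)} then -1 else 0)"

definition spin_c :: "nat \<Rightarrow> nat \<Rightarrow> complex" where
  "spin_c n a = complex_of_real (sqrt (real (a * (n + 1 - a))))"

text \<open>rho n k = rho_{n/2}(J_k): the standard (n+1)-dimensional irreducible unitary
  representation, J_k = -i S_k with S_k the usual spin-n/2 matrices
  (basis |n/2, n/2 - a>, a = 0..n).\<close>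
definition rho :: "nat \<Rightarrow> nat \<Rightarrow> complex mat" where
  "rho n k = mat (n+1) (n+1) (\<lambda>(r,c).
     if k = 1 then (if r + 1 = c then - \<i> * spin_c n c / 2
                    else if c + 1 = r then - \<i> * spin_c n r / 2 else 0)
     else if k = 2 then (if r + 1 = c then - spin_c n c / 2
                    else if c + 1 = r then spin_c n r / 2 else 0)
     else if k = 3 then (if r = c then - \<i> * (of_nat n / 2 - of_nat r) else 0)
     else 0)"

definition dimK :: "nat \<Rightarrow> nat" where
  "dimK N = (\<Sum>n\<le>N. n + 1)"

definition hdim :: "nat \<Rightarrow> nat" where
  "hdim N = 2 * dimK N"

definition Xop :: "nat \<Rightarrow> nat \<Rightarrow> complex mat" where
  "Xop N k = diag_block_mat (map (\<lambda>n. rho n k) [0..<Suc N])"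

text \<open>Tensor product of an operator on K_N with a 2x2 matrix, acting on
  H_N = K_N \<otimes> C^2 (basis vector (i, alpha) has index 2 i + alpha).\<close>
definition kron2 :: "complex mat \<Rightarrow> complex mat \<Rightarrow> complex mat" where
  "kron2 a s = mat (2 * dim_row a) (2 * dim_col a)
     (\<lambda>(i,j). a $$ (i div 2, j div 2) * s $$ (i mod 2, j mod 2))"

definition tau :: "nat \<Rightarrow> complex mat" where
  "tau k = mat 2 2 (\<lambda>(i,j).
     if k = 1 then (if i \<noteq> j then 1 else 0)
     else if k = 2 then (if i = 0 \<and> j = 1 then - \<i> else if i = 1 \<and> j = 0 then \<i> else 0)
     else if k = 3 then (if i = j then (if i = 0 then 1 else -1) else 0)
     else 0)"

definition sigma :: "nat \<Rightarrow> complex mat" where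
  "sigma k = \<i> \<cdot>\<^sub>m tau k"

definition amp :: "complex mat \<Rightarrow> complex mat" where
  "amp a = kron2 a (1\<^sub>m 2)"

definition DN :: "nat \<Rightarrow> complex mat" where
  "DN N = kron2 (Xop N 1) (sigma 1) + kron2 (Xop N 2) (sigma 2) + kron2 (Xop N 3) (sigma 3)"

definition cD :: "nat \<Rightarrow> complex mat \<Rightarrow> complex mat" where
  "cD N x = DN N * x - x * DN N"

definition AN :: "nat \<Rightarrow> complex mat set" where
  "AN N = carrier_mat (dimK N) (dimK N)"

definition msum :: "nat \<Rightarrow> complex mat list \<Rightarrow> complex mat" where
  "msum n xs = foldr (+) xs (0\<^sub>m n n)"

definition Omega1 :: "nat \<Rightarrow> complex mat set" where
  "Omega1 N = {msum (hdim N) (map (\<lambda>(a,b). amp a * cD N (amp b)) ps) | ps.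
                 set ps \<subseteq> AN N \<times> AN N}"

definition Sforms :: "nat \<Rightarrow> complex mat set" where
  "Sforms N = {msum (hdim N) (map (\<lambda>(a0,a1,a2). amp a0 * cD N (amp a1) * cD N (amp a2)) ts) | ts.
                 set ts \<subseteq> AN N \<times> AN N \<times> AN N}"

definition J2 :: "nat \<Rightarrow> complex mat set" where
  "J2 N = {msum (hdim N) (map (\<lambda>(a,b). cD N (amp a) * cD N (amp b)) ps) | ps.
             set ps \<subseteq> AN N \<times> AN N \<and>
             msum (hdim N) (map (\<lambda>(a,b). amp a * cD N (amp b)) ps) = 0\<^sub>m (hdim N) (hdim N)}"

text \<open>Class of w in Omega^2 = S / J^2 (the coset w + J^2).\<close>
definition om2 :: "nat \<Rightarrow> complex mat \<Rightarrow> complex mat set" where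
  "om2 N w = {w + j | j. j \<in> J2 N}"

definition Omega2 :: "nat \<Rightarrow> complex mat set set" where
  "Omega2 N = om2 N ` Sforms N"

definition wedge :: "nat \<Rightarrow> complex mat \<Rightarrow> complex mat \<Rightarrow> complex mat set" where
  "wedge N x y = om2 N (x * y)"

text \<open>d(sum a_j [D,b_j]) = [sum [D,a_j][D,b_j]] (independent of the representation).\<close>
definition dform :: "nat \<Rightarrow> complex mat \<Rightarrow> complex mat set" where
  "dform N x = om2 N (msum (hdim N) (map (\<lambda>(a,b). cD N (amp a) * cD N (amp b))
      (SOME ps. set ps \<subseteq> AN N \<times> AN N \<and>
                x = msum (hdim N) (map (\<lambda>(a,b). amp a * cD N (amp b)) ps))))"

definition eb :: "nat \<Rightarrow> nat \<Rightarrow> complex mat" where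
  "eb N k = kron2 (1\<^sub>m (dimK N)) (sigma k)"

definition omega :: "nat \<Rightarrow> nat \<Rightarrow> nat \<Rightarrow> complex mat" where
  "omega N j k = (- 1 / 2) \<cdot>\<^sub>m msum (hdim N) [eps j k l \<cdot>\<^sub>m eb N l. l \<leftarrow> [1,2,3]]"

text \<open>f_m = 1/2 sum eps_{mjk} e_j \<and> e_k, computed as the class of the corresponding
  sum of products (the quotient map S \<rightarrow> S/J^2 is linear).\<close>
definition fb :: "nat \<Rightarrow> nat \<Rightarrow> complex mat set" where
  "fb N m = om2 N ((1 / 2) \<cdot>\<^sub>m msum (hdim N)
              [eps m j k \<cdot>\<^sub>m (eb N j * eb N k). j \<leftarrow> [1,2,3], k \<leftarrow> [1,2,3]])"

text \<open>Formal finite C-linear combinations sum c_i (x_i \<otimes> w_i), represented as lists,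
  and their coefficient functions in the free vector space on E \<times> Omega^2.\<close>
type_synonym fsum = "(complex \<times> complex mat \<times> complex mat set) list"

definition fs :: "fsum \<Rightarrow> (complex mat \<times> complex mat set \<Rightarrow> complex)" where
  "fs xs = (\<lambda>p. sum_list (map (\<lambda>(c,x,w). if (x,w) = p then c else 0) xs))"

text \<open>Defining relations of the balanced tensor product over A_N:
  additivity in both slots, C-linearity in the first slot, and (x a) \<otimes> w = x \<otimes> (a w).\<close>
definition tgens :: "nat \<Rightarrow> fsum set" where
  "tgens N =
     {[(1, x + x', W), (-1, x, W), (-1, x', W)] | x x' W.
        x \<in> Omega1 N \<and> x' \<in> Omega1 N \<and> W \<in> Omega2 N}
   \<union> {[(1, x, om2 N (u + v)), (-1, x, om2 N u), (-1, x, om2 N v)] | x u v.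
        x \<in> Omega1 N \<and> u \<in> Sforms N \<and> v \<in> Sforms N}
   \<union> {[(1, c \<cdot>\<^sub>m x, W), (- c, x, W)] | c x W.
        x \<in> Omega1 N \<and> W \<in> Omega2 N}
   \<union> {[(1, x * amp a, om2 N u), (-1, x, om2 N (amp a * u))] | x a u.
        x \<in> Omega1 N \<and> a \<in> AN N \<and> u \<in> Sforms N}"

inductive_set tzero :: "nat \<Rightarrow> (complex mat \<times> complex mat set \<Rightarrow> complex) set" for N where
  tz_zero: "(\<lambda>_. 0) \<in> tzero N"
| tz_gen: "g \<in> tgens N \<Longrightarrow> fs g \<in> tzero N"
| tz_add: "t \<in> tzero N \<Longrightarrow> t' \<in> tzero N \<Longrightarrow> (\<lambda>p. t p + t' p) \<in> tzero N"
| tz_smult: "t \<in> tzero N \<Longrightarrow> (\<lambda>p. c * t p) \<in> tzero N"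

definition teq :: "nat \<Rightarrow> fsum \<Rightarrow> fsum \<Rightarrow> bool" where
  "teq N xs ys \<longleftrightarrow> (\<lambda>p. fs xs p - fs ys p) \<in> tzero N"

definition nabla :: "nat \<Rightarrow> nat \<Rightarrow> (complex \<times> complex mat \<times> complex mat) list" where
  "nabla N k = [(1, eb N j, omega N j k). j \<leftarrow> [1,2,3]]"

definition idwedge :: "nat \<Rightarrow> (complex \<times> complex mat \<times> complex mat) list \<Rightarrow> complex mat \<Rightarrow> fsum" where
  "idwedge N t z = [(c, x, wedge N y z). (c, x, y) \<leftarrow> t]"

definition curv :: "nat \<Rightarrow> nat \<Rightarrow> fsum" where
  "curv N j = concat [idwedge N (nabla N k) (omega N k j). k \<leftarrow> [1,2,3]]
              @ [(1, eb N k, dform N (omega N k j)). k \<leftarrow> [1,2,3]]"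

end

theory Submission
  imports Defs
begin


lemma mult_entry:
  assumes "i < dim_row A" "j < dim_col B" "dim_col A = dim_row B"
  shows "(A * B) $$ (i,j) = (\<Sum>s<dim_row B. A $$ (i,s) * B $$ (s,j))"
  using assms by (simp add: scalar_prod_def atLeast0LessThan)

lemma dimK_eq: "dimK N = sum_list (map (\<lambda>n. n + 1) [0..<Suc N])"
  unfolding dimK_def by (induction N) (simp_all add: atMost_Suc)

lemma rho_carrier: "rho n k \<in> carrier_mat (n+1) (n+1)"
  unfolding rho_def by simp

lemma Xop_carrier: "Xop N k \<in> carrier_mat (dimK N) (dimK N)"
proof -
  have r: "map dim_row (map (\<lambda>n. rho n k) [0..<Suc N]) = map (\<lambda>n. n+1) [0..<Suc N]"
    by (simp add: o_def rho_def)
  have c: "map dim_col (map (\<lambda>n. rho n k) [0..<Suc N]) = map (\<lambda>n. n+1) [0..<Suc N]"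
    by (simp add: o_def rho_def)
  show ?thesis unfolding Xop_def by (rule carrier_matI) (simp_all only: dim_diag_block_mat r c dimK_eq)
qed

lemma kron2_entry:
  "i < 2 * dim_row a \<Longrightarrow> j < 2 * dim_col a \<Longrightarrow>
   kron2 a s $$ (i,j) = a $$ (i div 2, j div 2) * s $$ (i mod 2, j mod 2)"
  "dim_row (kron2 a s) = 2 * dim_row a" "dim_col (kron2 a s) = 2 * dim_col a"
  unfolding kron2_def by auto

lemma sum_double: "(\<Sum>l<2*(n::nat). f l) = (\<Sum>l<n. f (2*l) + f (2*l+1))"
  by (induction n) (simp_all add: sum.distrib algebra_simps)

lemma kron2_mult:
  assumes "a \<in> carrier_mat n n" "b \<in> carrier_mat n n" "s \<in> carrier_mat 2 2" "t \<in> carrier_mat 2 2"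
  shows "kron2 a s * kron2 b t = kron2 (a * b) (s * t)"
proof (rule eq_matI)
  fix i j assume i: "i < dim_row (kron2 (a * b) (s * t))" and j: "j < dim_col (kron2 (a * b) (s * t))"
  have i': "i < 2*n" and j': "j < 2*n" using i j assms by (auto simp: kron2_entry)
  have id: "i div 2 < n" "j div 2 < n" "i mod 2 < 2" "j mod 2 < 2" using i' j' by auto
  have "(kron2 a s * kron2 b t) $$ (i,j) = (\<Sum>l<2*n. kron2 a s $$ (i,l) * kron2 b t $$ (l,j))"
    using assms i' j' by (subst mult_entry) (auto simp: kron2_entry)
  also have "\<dots> = (\<Sum>l<n. a $$ (i div 2, l) * b $$ (l, j div 2) * (s $$ (i mod 2, 0) * t $$ (0, j mod 2) + s $$ (i mod 2, 1) * t $$ (1, j mod 2)))"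
    unfolding sum_double using assms i' j'
  proof (intro sum.cong refl)
    fix l assume l: "l \<in> {..<n}"
    have e: "(2*l+1) mod 2 = 1" "(2*l+1) div 2 = l" "(2*l) div 2 = l" "(2*l) mod 2 = 0" by auto
    have l1: "2*l < 2 * dim_col a" "2*l+1 < 2 * dim_col a" "2*l < 2 * dim_row b" "2*l+1 < 2 * dim_row b"
      using l assms by auto
    show "kron2 a s $$ (i, 2 * l) * kron2 b t $$ (2 * l, j) + kron2 a s $$ (i, 2 * l + 1) * kron2 b t $$ (2 * l + 1, j) =
      a $$ (i div 2, l) * b $$ (l, j div 2) * (s $$ (i mod 2, 0) * t $$ (0, j mod 2) + s $$ (i mod 2, 1) * t $$ (1, j mod 2))"
      using assms i' j' l1 by (simp only: kron2_entry e carrier_matD) (simp add: algebra_simps)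
  qed
  also have "\<dots> = (a * b) $$ (i div 2, j div 2) * (s * t) $$ (i mod 2, j mod 2)"
  proof -
    have m1: "(a * b) $$ (i div 2, j div 2) = (\<Sum>l<n. a $$ (i div 2, l) * b $$ (l, j div 2))"
      using assms id by (subst mult_entry) auto
    have m2: "(s * t) $$ (i mod 2, j mod 2) = (\<Sum>l<2. s $$ (i mod 2, l) * t $$ (l, j mod 2))"
      using assms id by (subst mult_entry) auto
    show ?thesis unfolding m1 m2 sum_distrib_right by (simp add: numeral_2_eq_2)
  qed
  also have "\<dots> = kron2 (a * b) (s * t) $$ (i,j)" using assms i' j' by (simp add: kron2_entry)
  finally show "(kron2 a s * kron2 b t) $$ (i,j) = kron2 (a * b) (s * t) $$ (i,j)" .
qed (use assms in \<open>auto simp: kron2_entry\<close>)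

lemma kron2_carrier[simp]: "a \<in> carrier_mat n n \<Longrightarrow> s \<in> carrier_mat 2 2 \<Longrightarrow> kron2 a s \<in> carrier_mat (2*n) (2*n)"
  unfolding carrier_mat_def kron2_def by simp

lemma sigma_carrier[simp]: "sigma k \<in> carrier_mat 2 2"
  unfolding sigma_def tau_def by (rule smult_carrier_mat) (rule mat_carrier)

lemma sigma_dim[simp]: "dim_row (sigma k) = 2" "dim_col (sigma k) = 2"
  using carrier_matD[OF sigma_carrier[of k]] by auto

lemma Xop_carrier'[simp]: "Xop N k \<in> carrier_mat (dimK N) (dimK N)"
  by (rule Xop_carrier)

lemma Xop_dim[simp]: "dim_row (Xop N k) = dimK N" "dim_col (Xop N k) = dimK N"
  using carrier_matD[OF Xop_carrier[of N k]] by auto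

definition adk :: "nat \<Rightarrow> nat \<Rightarrow> complex mat \<Rightarrow> complex mat" where
  "adk N k b = Xop N k * b - b * Xop N k"

lemma adk_carrier[simp]: "b \<in> carrier_mat (dimK N) (dimK N) \<Longrightarrow> adk N k b \<in> carrier_mat (dimK N) (dimK N)"
  unfolding adk_def by (auto intro!: minus_carrier_mat)

lemma adk_dim[simp]: "b \<in> carrier_mat (dimK N) (dimK N) \<Longrightarrow> dim_row (adk N k b) = dimK N"
  "b \<in> carrier_mat (dimK N) (dimK N) \<Longrightarrow> dim_col (adk N k b) = dimK N"
  using carrier_matD[OF adk_carrier] by auto

lemma amp_carrier[simp]: "a \<in> carrier_mat (dimK N) (dimK N) \<Longrightarrow> amp a \<in> carrier_mat (hdim N) (hdim N)"
  by (simp add: amp_def hdim_def)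

lemma DN_carrier[simp]: "DN N \<in> carrier_mat (hdim N) (hdim N)"
  by (simp add: DN_def hdim_def)

lemma DN_amp:
  assumes b: "b \<in> carrier_mat (dimK N) (dimK N)"
  shows "DN N * amp b = kron2 (Xop N 1 * b) (sigma 1) + kron2 (Xop N 2 * b) (sigma 2) + kron2 (Xop N 3 * b) (sigma 3)"
    and "amp b * DN N = kron2 (b * Xop N 1) (sigma 1) + kron2 (b * Xop N 2) (sigma 2) + kron2 (b * Xop N 3) (sigma 3)"
proof -
  let ?K = "\<lambda>k. kron2 (Xop N k) (sigma k)"
  have c: "?K k \<in> carrier_mat (2 * dimK N) (2 * dimK N)" for k by simp
  have ab: "amp b \<in> carrier_mat (2 * dimK N) (2 * dimK N)" using b by (simp add: amp_def)
  have "DN N * amp b = ?K 1 * amp b + ?K 2 * amp b + ?K 3 * amp b"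
    unfolding DN_def using c ab
    by (metis add_carrier_mat add_mult_distrib_mat)
  also have "\<dots> = kron2 (Xop N 1 * b) (sigma 1) + kron2 (Xop N 2 * b) (sigma 2) + kron2 (Xop N 3 * b) (sigma 3)"
    unfolding amp_def using b by (simp add: kron2_mult[of _ "dimK N"])
  finally show "DN N * amp b = kron2 (Xop N 1 * b) (sigma 1) + kron2 (Xop N 2 * b) (sigma 2) + kron2 (Xop N 3 * b) (sigma 3)" .
  have "amp b * DN N = amp b * ?K 1 + amp b * ?K 2 + amp b * ?K 3"
    unfolding DN_def using c ab
    by (metis add_carrier_mat mult_add_distrib_mat)
  also have "\<dots> = kron2 (b * Xop N 1) (sigma 1) + kron2 (b * Xop N 2) (sigma 2) + kron2 (b * Xop N 3) (sigma 3)"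
    unfolding amp_def using b by (simp add: kron2_mult[of _ "dimK N"])
  finally show "amp b * DN N = kron2 (b * Xop N 1) (sigma 1) + kron2 (b * Xop N 2) (sigma 2) + kron2 (b * Xop N 3) (sigma 3)" .
qed

lemma cD_amp:
  assumes b: "b \<in> carrier_mat (dimK N) (dimK N)"
  shows "cD N (amp b) = kron2 (adk N 1 b) (sigma 1) + kron2 (adk N 2 b) (sigma 2) + kron2 (adk N 3 b) (sigma 3)"
  unfolding cD_def DN_amp[OF b]
  by (rule eq_matI) (use b in \<open>auto simp: kron2_entry adk_def algebra_simps\<close>)


lemma distrib3:
  assumes "A1 \<in> carrier_mat n n" "A2 \<in> carrier_mat n n" "A3 \<in> carrier_mat n n"
    "B1 \<in> carrier_mat n n" "B2 \<in> carrier_mat n n" "B3 \<in> carrier_mat n n"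
  shows "(A1 + A2 + A3) * (B1 + B2 + B3) =
    A1 * B1 + A1 * B2 + A1 * B3 + (A2 * B1 + A2 * B2 + A2 * B3) + (A3 * B1 + A3 * B2 + A3 * B3)"
proof -
  have r: "A * (B1 + B2 + B3) = A * B1 + A * B2 + A * B3" if "A \<in> carrier_mat n n" for A
    using that assms by (metis add_carrier_mat mult_add_distrib_mat)
  have "(A1 + A2 + A3) * (B1 + B2 + B3) = A1 * (B1 + B2 + B3) + A2 * (B1 + B2 + B3) + A3 * (B1 + B2 + B3)"
    using assms by (metis add_carrier_mat add_mult_distrib_mat)
  then show ?thesis using r assms by simp
qed

lemma form_pair_entry:
  assumes a: "a \<in> carrier_mat (dimK N) (dimK N)" and b: "b \<in> carrier_mat (dimK N) (dimK N)"
    and I: "I < hdim N" and J: "J < hdim N"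
  shows "(amp a * cD N (amp b)) $$ (I,J) =
     (a * adk N 1 b) $$ (I div 2, J div 2) * sigma 1 $$ (I mod 2, J mod 2)
   + (a * adk N 2 b) $$ (I div 2, J div 2) * sigma 2 $$ (I mod 2, J mod 2)
   + (a * adk N 3 b) $$ (I div 2, J div 2) * sigma 3 $$ (I mod 2, J mod 2)"
proof -
  have aa: "amp a \<in> carrier_mat (2 * dimK N) (2 * dimK N)" using a by (simp add: amp_def)
  have "amp a * cD N (amp b) = amp a * kron2 (adk N 1 b) (sigma 1) + amp a * kron2 (adk N 2 b) (sigma 2)
      + amp a * kron2 (adk N 3 b) (sigma 3)"
    unfolding cD_amp[OF b] using aa b by (metis add_carrier_mat mult_add_distrib_mat kron2_carrier adk_carrier sigma_carrier)
  also have "\<dots> = kron2 (a * adk N 1 b) (sigma 1) + kron2 (a * adk N 2 b) (sigma 2) + kron2 (a * adk N 3 b) (sigma 3)"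
    unfolding amp_def using a b by (simp add: kron2_mult[of _ "dimK N"])
  finally show ?thesis using I J a b by (simp add: kron2_entry hdim_def)
qed

lemma junk_pair_entry:
  assumes a: "a \<in> carrier_mat (dimK N) (dimK N)" and b: "b \<in> carrier_mat (dimK N) (dimK N)"
    and I: "I < hdim N" and J: "J < hdim N"
  shows "(cD N (amp a) * cD N (amp b)) $$ (I,J) =
     (\<Sum>k\<in>{1,2,3}. \<Sum>m\<in>{1,2,3}. (adk N k a * adk N m b) $$ (I div 2, J div 2) * (sigma k * sigma m) $$ (I mod 2, J mod 2))"
proof -
  have "cD N (amp a) * cD N (amp b) =
     kron2 (adk N 1 a * adk N 1 b) (sigma 1 * sigma 1) + kron2 (adk N 1 a * adk N 2 b) (sigma 1 * sigma 2) + kron2 (adk N 1 a * adk N 3 b) (sigma 1 * sigma 3)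
   + (kron2 (adk N 2 a * adk N 1 b) (sigma 2 * sigma 1) + kron2 (adk N 2 a * adk N 2 b) (sigma 2 * sigma 2) + kron2 (adk N 2 a * adk N 3 b) (sigma 2 * sigma 3))
   + (kron2 (adk N 3 a * adk N 1 b) (sigma 3 * sigma 1) + kron2 (adk N 3 a * adk N 2 b) (sigma 3 * sigma 2) + kron2 (adk N 3 a * adk N 3 b) (sigma 3 * sigma 3))"
    unfolding cD_amp[OF a] cD_amp[OF b]
    by (subst distrib3[of _ "2 * dimK N"]) (use a b in \<open>simp_all add: kron2_mult[of _ "dimK N"]\<close>)
  then show ?thesis using I J a b by (simp add: kron2_entry hdim_def index_mult_mat(2,3) del: index_mult_mat(1))
qed


definition Emu :: "nat \<Rightarrow> nat \<Rightarrow> nat \<Rightarrow> complex mat" where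
  "Emu n r p = mat n n (\<lambda>(i,j). if i = r \<and> j = p then 1 else 0)"

lemma Emu_carrier[simp]: "Emu n r p \<in> carrier_mat n n"
  by (simp add: Emu_def)

lemma Emu_dim[simp]: "dim_row (Emu n r p) = n" "dim_col (Emu n r p) = n"
  by (simp_all add: Emu_def)

lemma Emu_entry: "i < n \<Longrightarrow> j < n \<Longrightarrow> Emu n r p $$ (i,j) = (if i = r \<and> j = p then 1 else 0)"
  by (simp add: Emu_def)

lemma mult_Emu_entry:
  assumes "M \<in> carrier_mat n n" "i < n" "s < n" "r < n"
  shows "(M * Emu n r p) $$ (i,s) = (if s = p then M $$ (i,r) else 0)"
  using assms by (subst mult_entry) (auto simp: Emu_entry if_distrib[of "\<lambda>x. _ * x"] sum.If_cases)

lemma Emu_mult_entry: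
  assumes "M \<in> carrier_mat n n" "s < n" "j < n" "p < n"
  shows "(Emu n r p * M) $$ (s,j) = (if s = r then M $$ (p,j) else 0)"
  using assms by (subst mult_entry) (auto simp: Emu_entry if_distrib[of "\<lambda>x. x * _"] sum.If_cases)


lemma aE_entry:
  assumes "a \<in> carrier_mat n n" "i < n" "s < n" "r < n"
  shows "(c \<cdot>\<^sub>m (a * Emu n r p)) $$ (i,s) = (if s = p then c * a $$ (i,r) else 0)"
  using assms by (simp add: mult_Emu_entry del: index_mult_mat(1))

lemma adk_Emu_entry:
  assumes "s < dimK N" "j < dimK N" "q < dimK N" "r < dimK N"
  shows "adk N m (Emu (dimK N) q r) $$ (s,j) =
    (if j = r then Xop N m $$ (s,q) else 0) - (if s = q then Xop N m $$ (r,j) else 0)"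
  using assms unfolding adk_def by (simp add: mult_Emu_entry Emu_mult_entry del: index_mult_mat(1))

lemma adk_aE_entry:
  assumes a: "a \<in> carrier_mat (dimK N) (dimK N)" and "i < dimK N" "s < dimK N" "r < dimK N" "p < dimK N"
  shows "adk N k (c \<cdot>\<^sub>m (a * Emu (dimK N) r p)) $$ (i,s) =
    c * ((if s = p then (Xop N k * a) $$ (i,r) else 0) - a $$ (i,r) * Xop N k $$ (p,s))"
proof -
  let ?X = "Xop N k" and ?E = "Emu (dimK N) r p" and ?d = "dimK N"
  have c1: "(?X * (c \<cdot>\<^sub>m (a * ?E))) $$ (i,s) = c * (?X * a * ?E) $$ (i,s)"
  proof -
    have "?X * (c \<cdot>\<^sub>m (a * ?E)) = c \<cdot>\<^sub>m (?X * (a * ?E))"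
      using a by (simp add: mult_smult_distrib[of _ ?d ?d _ ?d])
    also have "?X * (a * ?E) = ?X * a * ?E" using a by (simp add: assoc_mult_mat[of _ ?d ?d _ ?d _ ?d])
    finally show ?thesis using assms by simp
  qed
  have c2: "((c \<cdot>\<^sub>m (a * ?E)) * ?X) $$ (i,s) = c * a $$ (i,r) * ?X $$ (p,s)"
  proof -
    have "((c \<cdot>\<^sub>m (a * ?E)) * ?X) $$ (i,s) = (\<Sum>t<?d. (c \<cdot>\<^sub>m (a * ?E)) $$ (i,t) * ?X $$ (t,s))"
      using assms by (subst mult_entry) auto
    also have "\<dots> = (\<Sum>t<?d. (if t = p then c * a $$ (i,r) * ?X $$ (p,s) else 0))"
      using assms by (intro sum.cong refl) (simp add: aE_entry del: index_smult_mat(1) index_mult_mat(1))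
    also have "\<dots> = c * a $$ (i,r) * ?X $$ (p,s)" using assms by simp
    finally show ?thesis .
  qed
  have Xa: "?X * a \<in> carrier_mat ?d ?d" by (rule mult_carrier_mat[OF Xop_carrier a])
  show ?thesis unfolding adk_def using assms c1 c2 Xa
    by (simp add: mult_Emu_entry algebra_simps del: index_mult_mat(1) index_smult_mat(1))
qed

lemma F_r:
  assumes a: "a \<in> carrier_mat (dimK N) (dimK N)" and "i < dimK N" "j < dimK N" "r < dimK N" "p < dimK N" "q < dimK N"
  shows "((c \<cdot>\<^sub>m (a * Emu (dimK N) r p)) * adk N k (Emu (dimK N) q r)) $$ (i,j) =
    c * a $$ (i,r) * ((if j = r then Xop N k $$ (p,q) else 0) - (if p = q then Xop N k $$ (r,j) else 0))"
proof -
  let ?d = "dimK N"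
  have "((c \<cdot>\<^sub>m (a * Emu ?d r p)) * adk N k (Emu ?d q r)) $$ (i,j)
      = (\<Sum>s<?d. (c \<cdot>\<^sub>m (a * Emu ?d r p)) $$ (i,s) * adk N k (Emu ?d q r) $$ (s,j))"
    using assms by (subst mult_entry) auto
  also have "\<dots> = (\<Sum>s<?d. if s = p then c * a $$ (i,r) * adk N k (Emu ?d q r) $$ (p,j) else 0)"
    using assms by (intro sum.cong refl) (simp add: aE_entry del: index_smult_mat(1) index_mult_mat(1))
  also have "\<dots> = c * a $$ (i,r) * adk N k (Emu ?d q r) $$ (p,j)" using assms by simp
  finally show ?thesis using assms by (simp add: adk_Emu_entry)
qed

lemma F_sum:
  assumes a: "a \<in> carrier_mat (dimK N) (dimK N)" and "i < dimK N" "j < dimK N" "p < dimK N" "q < dimK N"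
  shows "(\<Sum>r<dimK N. ((c \<cdot>\<^sub>m (a * Emu (dimK N) r p)) * adk N k (Emu (dimK N) q r)) $$ (i,j)) =
    c * (a $$ (i,j) * Xop N k $$ (p,q) - (if p = q then (a * Xop N k) $$ (i,j) else 0))"
proof -
  let ?d = "dimK N"
  have "(\<Sum>r<?d. ((c \<cdot>\<^sub>m (a * Emu ?d r p)) * adk N k (Emu ?d q r)) $$ (i,j)) =
     (\<Sum>r<?d. c * ((if j = r then a $$ (i,r) * Xop N k $$ (p,q) else 0) - (if p = q then a $$ (i,r) * Xop N k $$ (r,j) else 0)))"
    using assms by (intro sum.cong refl) (simp add: F_r algebra_simps del: index_smult_mat(1) index_mult_mat(1))
  also have "\<dots> = c * (a $$ (i,j) * Xop N k $$ (p,q) - (if p = q then (\<Sum>r<?d. a $$ (i,r) * Xop N k $$ (r,j)) else 0))"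
    using assms by (simp add: sum_distrib_left[symmetric] sum_subtractf)
  also have "\<dots> = c * (a $$ (i,j) * Xop N k $$ (p,q) - (if p = q then (a * Xop N k) $$ (i,j) else 0))"
    using assms by (simp add: mult_entry del: index_mult_mat(1))
  finally show ?thesis .
qed


lemma G_r:
  assumes a: "a \<in> carrier_mat (dimK N) (dimK N)" and "i < dimK N" "j < dimK N" "r < dimK N" "p < dimK N" "q < dimK N"
  shows "(adk N k (c \<cdot>\<^sub>m (a * Emu (dimK N) r p)) * adk N m (Emu (dimK N) q r)) $$ (i,j) =
    c * ((Xop N k * a) $$ (i,r) * ((if j = r then Xop N m $$ (p,q) else 0) - (if p = q then Xop N m $$ (r,j) else 0))
      - a $$ (i,r) * ((if j = r then (Xop N k * Xop N m) $$ (p,q) else 0) - Xop N k $$ (p,q) * Xop N m $$ (r,j)))"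
proof -
  let ?d = "dimK N" and ?W = "\<lambda>s. adk N m (Emu (dimK N) q r) $$ (s,j)"
  have ac: "c \<cdot>\<^sub>m (a * Emu ?d r p) \<in> carrier_mat ?d ?d" using a by simp
  have "(adk N k (c \<cdot>\<^sub>m (a * Emu (dimK N) r p)) * adk N m (Emu (dimK N) q r)) $$ (i,j)
     = (\<Sum>s<?d. adk N k (c \<cdot>\<^sub>m (a * Emu (dimK N) r p)) $$ (i,s) * ?W s)"
    using assms ac by (subst mult_entry) auto
  also have "\<dots> = (\<Sum>s<?d. (if s = p then c * (Xop N k * a) $$ (i,r) * ?W p else 0) - c * a $$ (i,r) * (Xop N k $$ (p,s) * ?W s))"
    using assms by (intro sum.cong refl) (simp add: adk_aE_entry algebra_simps del: index_smult_mat(1) index_mult_mat(1))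
  also have "\<dots> = c * (Xop N k * a) $$ (i,r) * ?W p - c * a $$ (i,r) * (\<Sum>s<?d. Xop N k $$ (p,s) * ?W s)"
    using assms by (simp add: sum_subtractf sum_distrib_left)
  also have "(\<Sum>s<?d. Xop N k $$ (p,s) * ?W s) = (\<Sum>s<?d. (if j = r then Xop N k $$ (p,s) * Xop N m $$ (s,q) else 0) - (if s = q then Xop N k $$ (p,q) * Xop N m $$ (r,j) else 0))"
    using assms by (intro sum.cong refl) (simp add: adk_Emu_entry algebra_simps)
  also have "\<dots> = (if j = r then (Xop N k * Xop N m) $$ (p,q) else 0) - Xop N k $$ (p,q) * Xop N m $$ (r,j)"
    using assms by (simp add: sum_subtractf mult_entry del: index_mult_mat(1))
  finally show ?thesis using assms by (simp add: adk_Emu_entry algebra_simps)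
qed

lemma G_sum:
  assumes a: "a \<in> carrier_mat (dimK N) (dimK N)" and "i < dimK N" "j < dimK N" "p < dimK N" "q < dimK N"
  shows "(\<Sum>r<dimK N. (adk N k (c \<cdot>\<^sub>m (a * Emu (dimK N) r p)) * adk N m (Emu (dimK N) q r)) $$ (i,j)) =
    c * ((Xop N k * a) $$ (i,j) * Xop N m $$ (p,q) - (if p = q then (Xop N k * a * Xop N m) $$ (i,j) else 0)
      - a $$ (i,j) * (Xop N k * Xop N m) $$ (p,q) + Xop N k $$ (p,q) * (a * Xop N m) $$ (i,j))"
proof -
  let ?d = "dimK N"
  have Xa: "Xop N k * a \<in> carrier_mat ?d ?d" by (rule mult_carrier_mat[OF Xop_carrier a])
  have "(\<Sum>r<?d. (adk N k (c \<cdot>\<^sub>m (a * Emu ?d r p)) * adk N m (Emu ?d q r)) $$ (i,j)) =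
     (\<Sum>r<?d. c * ((if j = r then (Xop N k * a) $$ (i,r) * Xop N m $$ (p,q) - a $$ (i,r) * (Xop N k * Xop N m) $$ (p,q) else 0)
        - (if p = q then (Xop N k * a) $$ (i,r) * Xop N m $$ (r,j) else 0)
        + Xop N k $$ (p,q) * (a $$ (i,r) * Xop N m $$ (r,j))))"
    using assms by (intro sum.cong refl) (simp add: G_r algebra_simps del: index_smult_mat(1) index_mult_mat(1))
  also have "\<dots> = c * ((Xop N k * a) $$ (i,j) * Xop N m $$ (p,q) - a $$ (i,j) * (Xop N k * Xop N m) $$ (p,q)
      - (if p = q then (\<Sum>r<?d. (Xop N k * a) $$ (i,r) * Xop N m $$ (r,j)) else 0)
      + Xop N k $$ (p,q) * (\<Sum>r<?d. a $$ (i,r) * Xop N m $$ (r,j)))"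
    using assms by (simp add: sum_distrib_left[symmetric] sum_subtractf sum.distrib)
  also have "\<dots> = c * ((Xop N k * a) $$ (i,j) * Xop N m $$ (p,q) - (if p = q then (Xop N k * a * Xop N m) $$ (i,j) else 0)
      - a $$ (i,j) * (Xop N k * Xop N m) $$ (p,q) + Xop N k $$ (p,q) * (a * Xop N m) $$ (i,j))"
    using assms Xa by (simp add: mult_entry algebra_simps del: index_mult_mat(1))
  finally show ?thesis .
qed



definition xv :: "nat \<Rightarrow> nat \<Rightarrow> nat \<Rightarrow> complex" where
  "xv k p r = (if p = 1 \<and> r = 2 then (if k = 1 then - \<i> / 2 else if k = 2 then - 1 / 2 else 0)
    else if p = 2 \<and> r = 1 then (if k = 1 then - \<i> / 2 else if k = 2 then 1 / 2 else 0)
    else if p = 1 \<and> r = 1 then (if k = 3 then - \<i> / 2 else 0)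
    else if p = 2 \<and> r = 2 then (if k = 3 then \<i> / 2 else 0) else 0)"

lemma spin_c_11: "spin_c (Suc 0) (Suc 0) = 1" by (simp add: spin_c_def)

lemma dimK_ge3: "N \<ge> 1 \<Longrightarrow> dimK N \<ge> 3"
proof -
  assume "N \<ge> 1"
  then have "{..1} \<subseteq> {..N}" by auto
  then have "(\<Sum>n\<le>1. n + 1) \<le> (\<Sum>n\<le>N. n + (1::nat))" by (intro sum_mono2) auto
  moreover have "(\<Sum>n\<le>(1::nat). n + 1) = 3" by (simp add: numeral_3_eq_3)
  ultimately show ?thesis unfolding dimK_def by linarith
qed

lemma Xop_small:
  assumes N: "N \<ge> 1" and p: "p < 3" and r: "r < dimK N"
  shows "Xop N k $$ (p,r) = xv k p r"
proof -
  let ?R = "diag_block_mat (map (\<lambda>n. rho n k) [2..<Suc N])"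
  have u: "[0..<Suc N] = 0 # 1 # [2..<Suc N]"
  proof -
    have "[0..<Suc N] = 0 # [1..<Suc N]" using upt_conv_Cons[of 0 "Suc N"] by simp
    also have "[1..<Suc N] = 1 # [2..<Suc N]" using N upt_conv_Cons[of 1 "Suc N"] by (simp add: numeral_2_eq_2)
    finally show ?thesis .
  qed
  have rd: "dim_row (rho n k) = n + 1" "dim_col (rho n k) = n + 1" for n by (simp_all add: rho_def)
  have X: "Xop N k = four_block_mat (rho 0 k) (0\<^sub>m 1 (2 + dim_col ?R)) (0\<^sub>m (2 + dim_row ?R) 1)
      (four_block_mat (rho 1 k) (0\<^sub>m 2 (dim_col ?R)) (0\<^sub>m (dim_row ?R) 2) ?R)"
    unfolding Xop_def u by (simp del: upt_Suc add: Let_def rd numeral_2_eq_2)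
  have dr: "dimK N = 3 + dim_row ?R" "dimK N = 3 + dim_col ?R"
    using Xop_dim[of N k] unfolding X by (simp_all del: upt_Suc add: rd)
  have r0: "rho 0 k $$ (0,0) = 0" by (simp add: rho_def)
  have r1: "a < 2 \<Longrightarrow> b < 2 \<Longrightarrow> rho (Suc 0) k $$ (a,b) = xv k (Suc a) (Suc b)" for a b
    by (auto simp: rho_def xv_def spin_c_11 less_2_cases_iff)
  let ?D = "four_block_mat (rho 1 k) (0\<^sub>m 2 (dim_col ?R)) (0\<^sub>m (dim_row ?R) 2) ?R"
  have dD: "dim_row ?D = 2 + dim_row ?R" "dim_col ?D = 2 + dim_col ?R" by (simp_all add: rd)
  have b1: "p < dim_row (rho 0 k) + dim_row ?D" "r < dim_col (rho 0 k) + dim_col ?D"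
    using p r dr unfolding dD rd by linarith+
  have e1: "Xop N k $$ (p,r) = (if p < 1 then if r < 1 then rho 0 k $$ (p,r) else 0
     else if r < 1 then 0 else ?D $$ (p - 1, r - 1))"
    unfolding X index_mat_four_block(1)[OF b1] using b1 by (simp add: rd)
  have A: "Xop N k $$ (p,r) = (if p = 0 \<or> r = 0 \<or> r \<ge> 3 then 0 else rho (Suc 0) k $$ (p - 1, r - 1))"
  proof (cases "p = 0 \<or> r = 0")
    case True then show ?thesis unfolding e1 using r0 by auto
  next
    case False
    have b2: "p - 1 < dim_row (rho 1 k) + dim_row ?R" "r - 1 < dim_col (rho 1 k) + dim_col ?R"
      using p b1 False unfolding dD rd by auto
    have b3: "r \<ge> 3 \<Longrightarrow> r - Suc (Suc (Suc 0)) < dim_col ?R" using b2 unfolding rd by linarith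
    show ?thesis unfolding e1 index_mat_four_block(1)[OF b2] using False p b3 by (auto simp del: upt_Suc simp add: rd)
  qed
  show ?thesis
  proof (cases "p = 0 \<or> r = 0 \<or> r \<ge> 3")
    case True then show ?thesis unfolding A using p by (auto simp: xv_def)
  next
    case False
    then have "p - 1 < 2" "r - 1 < 2" "Suc (p - 1) = p" "Suc (r - 1) = r" using p by auto
    then show ?thesis unfolding A using False r1[of "p - 1" "r - 1"] by simp
  qed
qed


lemma XX_small:
  assumes N: "N \<ge> 1" and p: "p < 3" and q: "q < 3"
  shows "(Xop N k * Xop N m) $$ (p,q) = (\<Sum>s<3. xv k p s * xv m s q)"
proof -
  have d: "3 \<le> dimK N" using dimK_ge3[OF N] .
  have "(Xop N k * Xop N m) $$ (p,q) = (\<Sum>s<dimK N. Xop N k $$ (p,s) * Xop N m $$ (s,q))"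
    using p q d by (subst mult_entry) auto
  also have "\<dots> = (\<Sum>s<dimK N. xv k p s * (if s < 3 then xv m s q else 0))"
    using p q d N by (intro sum.cong refl) (auto simp: Xop_small xv_def)
  also have "\<dots> = (\<Sum>s<3. xv k p s * (if s < 3 then xv m s q else 0))"
    using d by (intro sum.mono_neutral_right) (auto simp: xv_def)
  finally show ?thesis by simp
qed

lemma msum_carrier: "set xs \<subseteq> carrier_mat n n \<Longrightarrow> msum n xs \<in> carrier_mat n n"
  unfolding msum_def by (induction xs) auto

lemma msum_entry: "set xs \<subseteq> carrier_mat n n \<Longrightarrow> i < n \<Longrightarrow> j < n \<Longrightarrow>
   msum n xs $$ (i,j) = sum_list (map (\<lambda>x. x $$ (i,j)) xs)"
proof (induction xs)
  case Nil then show ?case by (simp add: msum_def)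
next
  case (Cons x xs)
  have "msum n xs \<in> carrier_mat n n" using Cons.prems msum_carrier by auto
  then show ?case using Cons by (simp add: msum_def)
qed

definition formL :: "nat \<Rightarrow> (complex mat \<times> complex mat) list \<Rightarrow> complex mat" where
  "formL N ps = msum (hdim N) (map (\<lambda>(a,b). amp a * cD N (amp b)) ps)"

definition junkL :: "nat \<Rightarrow> (complex mat \<times> complex mat) list \<Rightarrow> complex mat" where
  "junkL N ps = msum (hdim N) (map (\<lambda>(a,b). cD N (amp a) * cD N (amp b)) ps)"

lemma cD_carrier[simp]: "b \<in> carrier_mat (dimK N) (dimK N) \<Longrightarrow> cD N (amp b) \<in> carrier_mat (hdim N) (hdim N)"
  unfolding cD_def by (meson DN_carrier amp_carrier minus_carrier_mat mult_carrier_mat)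

lemma formL_carrier: "set ps \<subseteq> AN N \<times> AN N \<Longrightarrow> formL N ps \<in> carrier_mat (hdim N) (hdim N)"
  unfolding formL_def AN_def by (rule msum_carrier) (auto intro!: mult_carrier_mat[of _ _ "hdim N"])

lemma junkL_carrier: "set ps \<subseteq> AN N \<times> AN N \<Longrightarrow> junkL N ps \<in> carrier_mat (hdim N) (hdim N)"
  unfolding junkL_def AN_def by (rule msum_carrier) (auto intro!: mult_carrier_mat[of _ _ "hdim N"])

lemma formL_entry:
  assumes "set ps \<subseteq> AN N \<times> AN N" "I < hdim N" "J < hdim N"
  shows "formL N ps $$ (I,J) = sum_list (map (\<lambda>(a,b).
     (a * adk N 1 b) $$ (I div 2, J div 2) * sigma 1 $$ (I mod 2, J mod 2)
   + (a * adk N 2 b) $$ (I div 2, J div 2) * sigma 2 $$ (I mod 2, J mod 2)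
   + (a * adk N 3 b) $$ (I div 2, J div 2) * sigma 3 $$ (I mod 2, J mod 2)) ps)"
proof -
  have c: "set (map (\<lambda>(a,b). amp a * cD N (amp b)) ps) \<subseteq> carrier_mat (hdim N) (hdim N)"
    using assms(1) unfolding AN_def by (auto intro!: mult_carrier_mat[of _ _ "hdim N"])
  show ?thesis unfolding formL_def msum_entry[OF c assms(2,3)] map_map
    by (intro arg_cong[where f = sum_list] map_cong refl) (use assms in \<open>auto simp: AN_def form_pair_entry\<close>)
qed

lemma junkL_entry:
  assumes "set ps \<subseteq> AN N \<times> AN N" "I < hdim N" "J < hdim N"
  shows "junkL N ps $$ (I,J) = sum_list (map (\<lambda>(a,b).
     (\<Sum>k\<in>{1,2,3}. \<Sum>m\<in>{1,2,3}. (adk N k a * adk N m b) $$ (I div 2, J div 2) * (sigma k * sigma m) $$ (I mod 2, J mod 2))) ps)"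
proof -
  have c: "set (map (\<lambda>(a,b). cD N (amp a) * cD N (amp b)) ps) \<subseteq> carrier_mat (hdim N) (hdim N)"
    using assms(1) unfolding AN_def by (auto intro!: mult_carrier_mat[of _ _ "hdim N"])
  show ?thesis unfolding junkL_def msum_entry[OF c assms(2,3)] map_map
    by (intro arg_cong[where f = sum_list] map_cong refl) (use assms in \<open>auto simp: AN_def junk_pair_entry\<close>)
qed


definition LL :: "nat \<Rightarrow> complex mat \<Rightarrow> complex \<Rightarrow> nat \<Rightarrow> nat \<Rightarrow> (complex mat \<times> complex mat) list" where
  "LL N a c p q = map (\<lambda>r. (c \<cdot>\<^sub>m (a * Emu (dimK N) r p), Emu (dimK N) q r)) [0..<dimK N]"

definition LLs :: "nat \<Rightarrow> complex mat \<Rightarrow> (complex \<times> nat \<times> nat) list \<Rightarrow> (complex mat \<times> complex mat) list" where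
  "LLs N a ts = concat (map (\<lambda>(c,p,q). LL N a c p q) ts)"

definition FF :: "nat \<Rightarrow> complex mat \<Rightarrow> nat \<Rightarrow> nat \<Rightarrow> nat \<Rightarrow> nat \<Rightarrow> nat \<Rightarrow> complex" where
  "FF N a p q k i j = a $$ (i,j) * Xop N k $$ (p,q) - (if p = q then (a * Xop N k) $$ (i,j) else 0)"

definition GG :: "nat \<Rightarrow> complex mat \<Rightarrow> nat \<Rightarrow> nat \<Rightarrow> nat \<Rightarrow> nat \<Rightarrow> nat \<Rightarrow> nat \<Rightarrow> complex" where
  "GG N a p q k m i j = (Xop N k * a) $$ (i,j) * Xop N m $$ (p,q) - (if p = q then (Xop N k * a * Xop N m) $$ (i,j) else 0)
      - a $$ (i,j) * (Xop N k * Xop N m) $$ (p,q) + Xop N k $$ (p,q) * (a * Xop N m) $$ (i,j)"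

lemma LL_AN: "a \<in> AN N \<Longrightarrow> set (LL N a c p q) \<subseteq> AN N \<times> AN N"
  unfolding LL_def AN_def by auto

lemma LLs_AN: "a \<in> AN N \<Longrightarrow> set (LLs N a ts) \<subseteq> AN N \<times> AN N"
  unfolding LLs_def using LL_AN by fastforce

lemma sum_list_upt_lessThan: "sum_list (map f [0..<n]) = (\<Sum>r<n. f r)"
  by (simp add: interv_sum_list_conv_sum_set_nat atLeast0LessThan)

lemma formL_LL:
  assumes a: "a \<in> AN N" and IJ: "I < hdim N" "J < hdim N" and pq: "p < dimK N" "q < dimK N"
  shows "formL N (LL N a c p q) $$ (I,J) = c * (FF N a p q 1 (I div 2) (J div 2) * sigma 1 $$ (I mod 2, J mod 2)
     + FF N a p q 2 (I div 2) (J div 2) * sigma 2 $$ (I mod 2, J mod 2)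
     + FF N a p q 3 (I div 2) (J div 2) * sigma 3 $$ (I mod 2, J mod 2))"
proof -
  have a': "a \<in> carrier_mat (dimK N) (dimK N)" using a by (simp add: AN_def)
  have ij: "I div 2 < dimK N" "J div 2 < dimK N" using IJ by (auto simp: hdim_def)
  let ?E = "Emu (dimK N)"
  have "formL N (LL N a c p q) $$ (I,J) = (\<Sum>r<dimK N.
     ((c \<cdot>\<^sub>m (a * ?E r p)) * adk N 1 (?E q r)) $$ (I div 2, J div 2) * sigma 1 $$ (I mod 2, J mod 2)
   + ((c \<cdot>\<^sub>m (a * ?E r p)) * adk N 2 (?E q r)) $$ (I div 2, J div 2) * sigma 2 $$ (I mod 2, J mod 2)
   + ((c \<cdot>\<^sub>m (a * ?E r p)) * adk N 3 (?E q r)) $$ (I div 2, J div 2) * sigma 3 $$ (I mod 2, J mod 2))"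
    unfolding formL_entry[OF LL_AN[OF a] IJ] unfolding LL_def map_map o_def sum_list_upt_lessThan by simp
  also have "\<dots> = c * (FF N a p q 1 (I div 2) (J div 2) * sigma 1 $$ (I mod 2, J mod 2)
     + FF N a p q 2 (I div 2) (J div 2) * sigma 2 $$ (I mod 2, J mod 2)
     + FF N a p q 3 (I div 2) (J div 2) * sigma 3 $$ (I mod 2, J mod 2))"
    unfolding sum.distrib sum_distrib_right[symmetric] F_sum[OF a' ij pq] FF_def by (simp add: algebra_simps)
  finally show ?thesis .
qed

lemma junkL_LL:
  assumes a: "a \<in> AN N" and IJ: "I < hdim N" "J < hdim N" and pq: "p < dimK N" "q < dimK N"
  shows "junkL N (LL N a c p q) $$ (I,J) = c * (\<Sum>k\<in>{1,2,3}. \<Sum>m\<in>{1,2,3}.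
      GG N a p q k m (I div 2) (J div 2) * (sigma k * sigma m) $$ (I mod 2, J mod 2))"
proof -
  have a': "a \<in> carrier_mat (dimK N) (dimK N)" using a by (simp add: AN_def)
  have ij: "I div 2 < dimK N" "J div 2 < dimK N" using IJ by (auto simp: hdim_def)
  let ?E = "Emu (dimK N)"
  have "junkL N (LL N a c p q) $$ (I,J) = (\<Sum>r<dimK N. \<Sum>k\<in>{1,2,3}. \<Sum>m\<in>{1,2,3}.
     (adk N k (c \<cdot>\<^sub>m (a * ?E r p)) * adk N m (?E q r)) $$ (I div 2, J div 2) * (sigma k * sigma m) $$ (I mod 2, J mod 2))"
    unfolding junkL_entry[OF LL_AN[OF a] IJ] unfolding LL_def map_map o_def sum_list_upt_lessThan by simp
  also have "\<dots> = (\<Sum>k\<in>{1,2,3}. \<Sum>m\<in>{1,2,3}. \<Sum>r<dimK N.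
     (adk N k (c \<cdot>\<^sub>m (a * ?E r p)) * adk N m (?E q r)) $$ (I div 2, J div 2) * (sigma k * sigma m) $$ (I mod 2, J mod 2))"
    by (subst sum.swap) (subst (2) sum.swap, rule refl)
  also have "\<dots> = c * (\<Sum>k\<in>{1,2,3}. \<Sum>m\<in>{1,2,3}.
      GG N a p q k m (I div 2) (J div 2) * (sigma k * sigma m) $$ (I mod 2, J mod 2))"
    unfolding sum_distrib_right[symmetric] G_sum[OF a' ij pq] GG_def sum_distrib_left by (simp add: algebra_simps)
  finally show ?thesis .
qed


lemma sum_list_concat': "sum_list (concat xss) = sum_list (map sum_list (xss :: complex list list))"
  by (induction xss) auto

lemma formL_concat:
  assumes "\<And>xs. xs \<in> set xss \<Longrightarrow> set xs \<subseteq> AN N \<times> AN N" "I < hdim N" "J < hdim N"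
  shows "formL N (concat xss) $$ (I,J) = sum_list (map (\<lambda>xs. formL N xs $$ (I,J)) xss)"
proof -
  have s: "set (concat xss) \<subseteq> AN N \<times> AN N" using assms(1) by auto
  show ?thesis unfolding formL_entry[OF s assms(2,3)] map_concat sum_list_concat' map_map o_def
    by (intro arg_cong[where f = sum_list] map_cong refl) (use assms in \<open>simp add: formL_entry\<close>)
qed

lemma junkL_concat:
  assumes "\<And>xs. xs \<in> set xss \<Longrightarrow> set xs \<subseteq> AN N \<times> AN N" "I < hdim N" "J < hdim N"
  shows "junkL N (concat xss) $$ (I,J) = sum_list (map (\<lambda>xs. junkL N xs $$ (I,J)) xss)"
proof -
  have s: "set (concat xss) \<subseteq> AN N \<times> AN N" using assms(1) by auto
  show ?thesis unfolding junkL_entry[OF s assms(2,3)] map_concat sum_list_concat' map_map o_def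
    by (intro arg_cong[where f = sum_list] map_cong refl) (use assms in \<open>simp add: junkL_entry\<close>)
qed

lemma formL_LLs:
  assumes a: "a \<in> AN N" and IJ: "I < hdim N" "J < hdim N" and ts: "\<forall>(c,p,q)\<in>set ts. p < dimK N \<and> q < dimK N"
  shows "formL N (LLs N a ts) $$ (I,J) = sum_list (map (\<lambda>(c,p,q). c * (FF N a p q 1 (I div 2) (J div 2) * sigma 1 $$ (I mod 2, J mod 2)
     + FF N a p q 2 (I div 2) (J div 2) * sigma 2 $$ (I mod 2, J mod 2)
     + FF N a p q 3 (I div 2) (J div 2) * sigma 3 $$ (I mod 2, J mod 2))) ts)"
  unfolding LLs_def
proof (subst formL_concat)
  show "\<And>xs. xs \<in> set (map (\<lambda>(c, p, q). LL N a c p q) ts) \<Longrightarrow> set xs \<subseteq> AN N \<times> AN N"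
    using LL_AN[OF a] by auto
qed (use a IJ ts in \<open>auto simp: map_map o_def formL_LL intro!: arg_cong[where f = sum_list] map_cong\<close>)

lemma junkL_LLs:
  assumes a: "a \<in> AN N" and IJ: "I < hdim N" "J < hdim N" and ts: "\<forall>(c,p,q)\<in>set ts. p < dimK N \<and> q < dimK N"
  shows "junkL N (LLs N a ts) $$ (I,J) = sum_list (map (\<lambda>(c,p,q). c * (\<Sum>k\<in>{1,2,3}. \<Sum>m\<in>{1,2,3}.
      GG N a p q k m (I div 2) (J div 2) * (sigma k * sigma m) $$ (I mod 2, J mod 2))) ts)"
  unfolding LLs_def
proof (subst junkL_concat)
  show "\<And>xs. xs \<in> set (map (\<lambda>(c, p, q). LL N a c p q) ts) \<Longrightarrow> set xs \<subseteq> AN N \<times> AN N"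
    using LL_AN[OF a] by auto
qed (use a IJ ts in \<open>auto simp: map_map o_def junkL_LL intro!: arg_cong[where f = sum_list] map_cong\<close>)

definition sg :: "nat \<Rightarrow> nat \<Rightarrow> nat \<Rightarrow> complex" where
  "sg k a b = (if k = 1 then (if a \<noteq> b then \<i> else 0)
     else if k = 2 then (if a = 0 \<and> b = 1 then 1 else if a = 1 \<and> b = 0 then -1 else 0)
     else if k = 3 then (if a = b then (if a = 0 then \<i> else - \<i>) else 0) else 0)"

lemma sigma_entry: "a < 2 \<Longrightarrow> b < 2 \<Longrightarrow> sigma k $$ (a,b) = sg k a b"
  unfolding sigma_def tau_def sg_def by (auto simp: less_2_cases_iff)

lemma sigma_prod_entry: "a < 2 \<Longrightarrow> b < 2 \<Longrightarrow> (sigma k * sigma m) $$ (a,b) = sg k a 0 * sg m 0 b + sg k a 1 * sg m 1 b"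
  by (subst mult_entry) (auto simp: sigma_entry numeral_2_eq_2)


definition T :: "nat \<Rightarrow> (complex \<times> nat \<times> nat) list" where
  "T l = (if l = 1 then [(\<i>,1,2),(\<i>,2,1)] else if l = 2 then [(-1,1,2),(1,2,1)] else [(\<i>,1,1),(-\<i>,2,2)])"

lemma one_AN[simp]: "1\<^sub>m (dimK N) \<in> AN N" by (simp add: AN_def)

lemma FF_one: "i < dimK N \<Longrightarrow> j < dimK N \<Longrightarrow>
  FF N (1\<^sub>m (dimK N)) p q k i j = (if i = j then Xop N k $$ (p,q) else 0) - (if p = q then Xop N k $$ (i,j) else 0)"
  unfolding FF_def by simp

lemma mod2_cases: "(I::nat) mod 2 = 0 \<or> I mod 2 = 1" by auto

lemma eb_entry: "I < hdim N \<Longrightarrow> J < hdim N \<Longrightarrow>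
   eb N l $$ (I,J) = (if I div 2 = J div 2 then sg l (I mod 2) (J mod 2) else 0)"
  unfolding eb_def by (subst kron2_entry) (auto simp: hdim_def sigma_entry)

lemma eb_carrier[simp]: "eb N l \<in> carrier_mat (hdim N) (hdim N)"
  unfolding eb_def hdim_def by simp

lemma formT:
  assumes N: "N \<ge> 1" and l: "l \<in> {1,2,3}"
  shows "formL N (LLs N (1\<^sub>m (dimK N)) (T l)) = eb N l"
proof (rule eq_matI)
  have d: "3 \<le> dimK N" using dimK_ge3[OF N] .
  have ts: "\<forall>(c,p,q)\<in>set (T l). p < dimK N \<and> q < dimK N" using d by (auto simp: T_def)
  fix I J assume "I < dim_row (eb N l)" "J < dim_col (eb N l)"
  then have IJ: "I < hdim N" "J < hdim N" using carrier_matD[OF eb_carrier] by auto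
  have ij: "I div 2 < dimK N" "J div 2 < dimK N" using IJ by (auto simp: hdim_def)
  have ab: "I mod 2 < 2" "J mod 2 < 2" by auto
  show "formL N (LLs N (1\<^sub>m (dimK N)) (T l)) $$ (I,J) = eb N l $$ (I,J)"
    unfolding formL_LLs[OF one_AN IJ ts] eb_entry[OF IJ]
    using l mod2_cases[of I] mod2_cases[of J] d
    by (auto simp: T_def FF_one[OF ij] Xop_small[OF N] sigma_entry sg_def xv_def algebra_simps)
qed (use carrier_matD[OF formL_carrier[OF LLs_AN[OF one_AN[of N]]]] carrier_matD[OF eb_carrier[of N l]] in auto)


lemma GG_one: "i < dimK N \<Longrightarrow> j < dimK N \<Longrightarrow>
  GG N (1\<^sub>m (dimK N)) p q k m i j = Xop N k $$ (i,j) * Xop N m $$ (p,q) - (if p = q then (Xop N k * Xop N m) $$ (i,j) else 0)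
      - (if i = j then (Xop N k * Xop N m) $$ (p,q) else 0) + Xop N k $$ (p,q) * Xop N m $$ (i,j)"
  unfolding GG_def by simp

lemma amp_entry: "a \<in> carrier_mat (dimK N) (dimK N) \<Longrightarrow> I < hdim N \<Longrightarrow> J < hdim N \<Longrightarrow>
   amp a $$ (I,J) = (if I mod 2 = J mod 2 then a $$ (I div 2, J div 2) else 0)"
  unfolding amp_def by (subst kron2_entry) (auto simp: hdim_def)

lemma lessThan_3: "{..<3::nat} = {0,1,2}" by auto

lemma junkT:
  assumes N: "N \<ge> 1" and l: "l \<in> {1,2,3}"
  shows "junkL N (LLs N (1\<^sub>m (dimK N)) (T l)) = eb N l + amp ((-2) \<cdot>\<^sub>m Xop N l)"
proof (rule eq_matI)
  have d: "3 \<le> dimK N" using dimK_ge3[OF N] .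
  have ts: "\<forall>(c,p,q)\<in>set (T l). p < dimK N \<and> q < dimK N" using d by (auto simp: T_def)
  fix I J assume "I < dim_row (eb N l + amp ((-2) \<cdot>\<^sub>m Xop N l))" "J < dim_col (eb N l + amp ((-2) \<cdot>\<^sub>m Xop N l))"
  then have IJ: "I < hdim N" "J < hdim N" by (auto simp: amp_def kron2_entry hdim_def)
  have ij: "I div 2 < dimK N" "J div 2 < dimK N" using IJ by (auto simp: hdim_def)
  have r: "(eb N l + amp ((-2) \<cdot>\<^sub>m Xop N l)) $$ (I,J) =
     (if I div 2 = J div 2 then sg l (I mod 2) (J mod 2) else 0) + (if I mod 2 = J mod 2 then -2 * Xop N l $$ (I div 2, J div 2) else 0)"
    using IJ ij by (simp add: eb_entry amp_entry amp_def kron2_entry hdim_def)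
  show "junkL N (LLs N (1\<^sub>m (dimK N)) (T l)) $$ (I,J) = (eb N l + amp ((-2) \<cdot>\<^sub>m Xop N l)) $$ (I,J)"
    unfolding junkL_LLs[OF one_AN IJ ts] r
    using l mod2_cases[of I] mod2_cases[of J] d
    by (elim disjE insertE emptyE; simp add: T_def GG_one[OF ij] Xop_small[OF N] XX_small[OF N] sigma_prod_entry sg_def xv_def lessThan_3 del: index_mult_mat(1);
        (intro conjI impI)?; simp add: algebra_simps)
next
  show "dim_row (junkL N (LLs N (1\<^sub>m (dimK N)) (T l))) = dim_row (eb N l + amp ((-2) \<cdot>\<^sub>m Xop N l))"
    using carrier_matD[OF junkL_carrier[OF LLs_AN[OF one_AN[of N]]]] by (simp add: amp_def kron2_entry hdim_def)
  show "dim_col (junkL N (LLs N (1\<^sub>m (dimK N)) (T l))) = dim_col (eb N l + amp ((-2) \<cdot>\<^sub>m Xop N l))"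
    using carrier_matD[OF junkL_carrier[OF LLs_AN[OF one_AN[of N]]]] by (simp add: amp_def kron2_entry hdim_def)
qed


definition Zt :: "(complex \<times> nat \<times> nat) list" where
  "Zt = [(4/3,0,0),(-2/3,1,1),(-2/3,2,2)]"

lemma formZ:
  assumes N: "N \<ge> 1" and a: "a \<in> AN N"
  shows "formL N (LLs N a Zt) = 0\<^sub>m (hdim N) (hdim N)"
proof (rule eq_matI)
  have d: "3 \<le> dimK N" using dimK_ge3[OF N] .
  have ts: "\<forall>(c,p,q)\<in>set Zt. p < dimK N \<and> q < dimK N" using d by (auto simp: Zt_def)
  fix I J assume "I < dim_row (0\<^sub>m (hdim N) (hdim N))" "J < dim_col (0\<^sub>m (hdim N) (hdim N))"
  then have IJ: "I < hdim N" "J < hdim N" by auto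
  show "formL N (LLs N a Zt) $$ (I,J) = 0\<^sub>m (hdim N) (hdim N) $$ (I,J)"
    unfolding formL_LLs[OF a IJ ts] using IJ d
    by (simp add: Zt_def FF_def Xop_small[OF N] xv_def algebra_simps del: index_mult_mat(1))
qed (use carrier_matD[OF formL_carrier[OF LLs_AN[OF a]]] in auto)

lemma junkZ:
  assumes N: "N \<ge> 1" and a: "a \<in> AN N"
  shows "junkL N (LLs N a Zt) = amp a"
proof (rule eq_matI)
  have d: "3 \<le> dimK N" using dimK_ge3[OF N] .
  have a': "a \<in> carrier_mat (dimK N) (dimK N)" using a by (simp add: AN_def)
  have ts: "\<forall>(c,p,q)\<in>set Zt. p < dimK N \<and> q < dimK N" using d by (auto simp: Zt_def)
  fix I J assume "I < dim_row (amp a)" "J < dim_col (amp a)"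
  then have IJ: "I < hdim N" "J < hdim N" using carrier_matD[OF amp_carrier[OF a']] by auto
  show "junkL N (LLs N a Zt) $$ (I,J) = amp a $$ (I,J)"
    unfolding junkL_LLs[OF a IJ ts] amp_entry[OF a' IJ]
    using mod2_cases[of I] mod2_cases[of J] d
    by (elim disjE; simp add: Zt_def GG_def Xop_small[OF N] XX_small[OF N] sigma_prod_entry sg_def xv_def lessThan_3 del: index_mult_mat(1);
        simp add: field_simps)
qed (use carrier_matD[OF junkL_carrier[OF LLs_AN[OF a]]] carrier_matD[OF amp_carrier[of a N]] a in \<open>auto simp: AN_def\<close>)




definition sc :: "complex \<Rightarrow> (complex mat \<times> complex mat) list \<Rightarrow> (complex mat \<times> complex mat) list" where
  "sc c ps = map (\<lambda>(a,b). (c \<cdot>\<^sub>m a, b)) ps"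

lemma sc_AN: "set ps \<subseteq> AN N \<times> AN N \<Longrightarrow> set (sc c ps) \<subseteq> AN N \<times> AN N"
  unfolding sc_def AN_def by auto

lemma adk_smult: "a \<in> carrier_mat (dimK N) (dimK N) \<Longrightarrow> adk N k (c \<cdot>\<^sub>m a) = c \<cdot>\<^sub>m adk N k a"
  unfolding adk_def
  by (rule eq_matI) (auto simp: mult_smult_distrib[of _ "dimK N" "dimK N" _ "dimK N"]
        mult_smult_assoc_mat[of _ "dimK N" "dimK N" _ "dimK N"] algebra_simps)

lemma formL_sc:
  assumes ps: "set ps \<subseteq> AN N \<times> AN N"
  shows "formL N (sc c ps) = c \<cdot>\<^sub>m formL N ps"
proof (rule eq_matI)
  fix I J assume "I < dim_row (c \<cdot>\<^sub>m formL N ps)" "J < dim_col (c \<cdot>\<^sub>m formL N ps)"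
  then have IJ: "I < hdim N" "J < hdim N" using carrier_matD[OF formL_carrier[OF ps]] by auto
  have ij: "I div 2 < dimK N" "J div 2 < dimK N" using IJ by (auto simp: hdim_def)
  have e: "((c \<cdot>\<^sub>m a) * adk N k b) $$ (I div 2, J div 2) = c * (a * adk N k b) $$ (I div 2, J div 2)"
    if "(a,b) \<in> set ps" for a b k
    using that ps ij by (auto simp: AN_def mult_smult_assoc_mat[of _ "dimK N" "dimK N" _ "dimK N"])
  have "formL N (sc c ps) $$ (I,J) = c * formL N ps $$ (I,J)"
    unfolding formL_entry[OF sc_AN[OF ps] IJ] formL_entry[OF ps IJ] unfolding sc_def map_map o_def sum_list_const_mult[symmetric]
    by (intro arg_cong[where f = sum_list] map_cong refl) (auto simp: e algebra_simps)
  then show "formL N (sc c ps) $$ (I,J) = (c \<cdot>\<^sub>m formL N ps) $$ (I,J)"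
    using IJ carrier_matD[OF formL_carrier[OF ps]] by simp
qed (use carrier_matD[OF formL_carrier[OF ps]] carrier_matD[OF formL_carrier[OF sc_AN[OF ps]]] in auto)

lemma junkL_sc:
  assumes ps: "set ps \<subseteq> AN N \<times> AN N"
  shows "junkL N (sc c ps) = c \<cdot>\<^sub>m junkL N ps"
proof (rule eq_matI)
  fix I J assume "I < dim_row (c \<cdot>\<^sub>m junkL N ps)" "J < dim_col (c \<cdot>\<^sub>m junkL N ps)"
  then have IJ: "I < hdim N" "J < hdim N" using carrier_matD[OF junkL_carrier[OF ps]] by auto
  have ij: "I div 2 < dimK N" "J div 2 < dimK N" using IJ by (auto simp: hdim_def)
  have e: "(adk N k (c \<cdot>\<^sub>m a) * adk N m b) $$ (I div 2, J div 2) = c * (adk N k a * adk N m b) $$ (I div 2, J div 2)"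
    if "(a,b) \<in> set ps" for a b k m
  proof -
    have "a \<in> carrier_mat (dimK N) (dimK N)" "b \<in> carrier_mat (dimK N) (dimK N)" using that ps by (auto simp: AN_def)
    then show ?thesis using ij
      by (simp add: adk_smult mult_smult_assoc_mat[of _ "dimK N" "dimK N" _ "dimK N"])
  qed
  have "junkL N (sc c ps) $$ (I,J) = c * junkL N ps $$ (I,J)"
    unfolding junkL_entry[OF sc_AN[OF ps] IJ] junkL_entry[OF ps IJ] unfolding sc_def map_map o_def sum_list_const_mult[symmetric]
    by (intro arg_cong[where f = sum_list] map_cong refl) (auto simp: e sum_distrib_left algebra_simps)
  then show "junkL N (sc c ps) $$ (I,J) = (c \<cdot>\<^sub>m junkL N ps) $$ (I,J)"
    using IJ carrier_matD[OF junkL_carrier[OF ps]] by simp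
qed (use carrier_matD[OF junkL_carrier[OF ps]] carrier_matD[OF junkL_carrier[OF sc_AN[OF ps]]] in auto)

lemma formL_append:
  assumes ps: "set ps \<subseteq> AN N \<times> AN N" and qs: "set qs \<subseteq> AN N \<times> AN N"
  shows "formL N (ps @ qs) = formL N ps + formL N qs"
proof -
  have pq: "set (ps @ qs) \<subseteq> AN N \<times> AN N" using ps qs by auto
  show ?thesis
  proof (rule eq_matI)
  fix I J assume "I < dim_row (formL N ps + formL N qs)" "J < dim_col (formL N ps + formL N qs)"
  then have IJ: "I < hdim N" "J < hdim N" using carrier_matD[OF formL_carrier[OF qs]] by auto
  show "formL N (ps @ qs) $$ (I,J) = (formL N ps + formL N qs) $$ (I,J)"
    using IJ carrier_matD[OF formL_carrier[OF qs]]
    unfolding formL_entry[OF pq IJ] by (simp add: formL_entry[OF ps IJ] formL_entry[OF qs IJ])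
  qed (use carrier_matD[OF formL_carrier[OF qs]] carrier_matD[OF formL_carrier[OF pq]] in simp_all)
qed

lemma junkL_append:
  assumes ps: "set ps \<subseteq> AN N \<times> AN N" and qs: "set qs \<subseteq> AN N \<times> AN N"
  shows "junkL N (ps @ qs) = junkL N ps + junkL N qs"
proof -
  have pq: "set (ps @ qs) \<subseteq> AN N \<times> AN N" using ps qs by auto
  show ?thesis
  proof (rule eq_matI)
  fix I J assume "I < dim_row (junkL N ps + junkL N qs)" "J < dim_col (junkL N ps + junkL N qs)"
  then have IJ: "I < hdim N" "J < hdim N" using carrier_matD[OF junkL_carrier[OF qs]] by auto
  show "junkL N (ps @ qs) $$ (I,J) = (junkL N ps + junkL N qs) $$ (I,J)"
    using IJ carrier_matD[OF junkL_carrier[OF qs]]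
    unfolding junkL_entry[OF pq IJ] by (simp add: junkL_entry[OF ps IJ] junkL_entry[OF qs IJ])
  qed (use carrier_matD[OF junkL_carrier[OF qs]] carrier_matD[OF junkL_carrier[OF pq]] in simp_all)
qed

lemma J2_def': "J2 N = {junkL N ps | ps. set ps \<subseteq> AN N \<times> AN N \<and> formL N ps = 0\<^sub>m (hdim N) (hdim N)}"
  unfolding J2_def junkL_def formL_def by simp

lemma J2_carrier: "x \<in> J2 N \<Longrightarrow> x \<in> carrier_mat (hdim N) (hdim N)"
  unfolding J2_def' using junkL_carrier by blast

lemma J2_add: assumes "x \<in> J2 N" "y \<in> J2 N" shows "x + y \<in> J2 N"
proof -
  obtain ps where ps: "x = junkL N ps" "set ps \<subseteq> AN N \<times> AN N" "formL N ps = 0\<^sub>m (hdim N) (hdim N)"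
    using assms(1) unfolding J2_def' by blast
  obtain qs where qs: "y = junkL N qs" "set qs \<subseteq> AN N \<times> AN N" "formL N qs = 0\<^sub>m (hdim N) (hdim N)"
    using assms(2) unfolding J2_def' by blast
  have "x + y = junkL N (ps @ qs)" using ps qs junkL_append by simp
  moreover have "formL N (ps @ qs) = 0\<^sub>m (hdim N) (hdim N)" using ps qs formL_append by simp
  moreover have "set (ps @ qs) \<subseteq> AN N \<times> AN N" using ps qs by auto
  ultimately show ?thesis unfolding J2_def' by blast
qed

lemma J2_smult: assumes "x \<in> J2 N" shows "c \<cdot>\<^sub>m x \<in> J2 N"
proof -
  obtain ps where ps: "x = junkL N ps" "set ps \<subseteq> AN N \<times> AN N" "formL N ps = 0\<^sub>m (hdim N) (hdim N)"
    using assms(1) unfolding J2_def' by blast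
  have "c \<cdot>\<^sub>m x = junkL N (sc c ps)" using ps junkL_sc by simp
  moreover have "formL N (sc c ps) = 0\<^sub>m (hdim N) (hdim N)" using ps formL_sc by auto
  moreover have "set (sc c ps) \<subseteq> AN N \<times> AN N" using ps sc_AN by auto
  ultimately show ?thesis unfolding J2_def' by blast
qed

lemma J2_amp: assumes N: "N \<ge> 1" and a: "a \<in> AN N" shows "amp a \<in> J2 N"
proof -
  have "junkL N (LLs N a Zt) \<in> J2 N" unfolding J2_def' using formZ[OF N a] LLs_AN[OF a] by blast
  then show ?thesis using junkZ[OF N a] by simp
qed

lemma om2_eq:
  assumes u: "u \<in> carrier_mat (hdim N) (hdim N)" and v: "v \<in> carrier_mat (hdim N) (hdim N)" and uv: "u - v \<in> J2 N"
  shows "om2 N u = om2 N v"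
proof -
  have vu: "v - u \<in> J2 N"
  proof -
    have "v - u = (-1) \<cdot>\<^sub>m (u - v)" using u v by (intro eq_matI) auto
    then show ?thesis using J2_smult[OF uv] by simp
  qed
  have "w + j = z + ((w - z) + j)" if "w \<in> carrier_mat (hdim N) (hdim N)" "z \<in> carrier_mat (hdim N) (hdim N)" "j \<in> J2 N" for w z j
    using that J2_carrier[OF that(3)] by (intro eq_matI) auto
  then show ?thesis unfolding om2_def using u v uv vu J2_add by blast
qed

lemma dform_eq:
  assumes ps0: "set ps0 \<subseteq> AN N \<times> AN N" and x: "x = formL N ps0"
  shows "dform N x = om2 N (junkL N ps0)"
proof -
  let ?P = "\<lambda>ps. set ps \<subseteq> AN N \<times> AN N \<and> x = msum (hdim N) (map (\<lambda>(a,b). amp a * cD N (amp b)) ps)"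
  have ex: "\<exists>ps. ?P ps" using ps0 x unfolding formL_def by blast
  define ps' where "ps' = (SOME ps. ?P ps)"
  have P': "?P ps'" unfolding ps'_def using someI_ex[OF ex] .
  then have ps': "set ps' \<subseteq> AN N \<times> AN N" "formL N ps' = x" unfolding formL_def by auto
  have d: "dform N x = om2 N (junkL N ps')" unfolding dform_def junkL_def ps'_def by simp
  let ?L = "ps' @ sc (-1) ps0"
  have L: "set ?L \<subseteq> AN N \<times> AN N" using ps' ps0 sc_AN by auto
  have fx: "x \<in> carrier_mat (hdim N) (hdim N)" using x formL_carrier[OF ps0] by simp
  have "formL N ?L = x + (-1) \<cdot>\<^sub>m x"
    using formL_append[OF ps'(1) sc_AN[OF ps0]] formL_sc[OF ps0] ps' x by simp
  also have "\<dots> = 0\<^sub>m (hdim N) (hdim N)" using fx by (intro eq_matI) auto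
  finally have f0: "formL N ?L = 0\<^sub>m (hdim N) (hdim N)" .
  have j1: "junkL N ?L \<in> J2 N" unfolding J2_def' using L f0 by blast
  have "junkL N ?L = junkL N ps' - junkL N ps0"
    using junkL_append[OF ps'(1) sc_AN[OF ps0]] junkL_sc[OF ps0]
      junkL_carrier[OF ps'(1)] junkL_carrier[OF ps0]
    by (simp, intro eq_matI) auto
  then have "junkL N ps' - junkL N ps0 \<in> J2 N" using j1 by simp
  then show ?thesis unfolding d by (rule om2_eq[OF junkL_carrier[OF ps'(1)] junkL_carrier[OF ps0]])
qed


definition dl :: "complex mat \<Rightarrow> complex mat set \<Rightarrow> (complex mat \<times> complex mat set \<Rightarrow> complex)" where
  "dl x w = (\<lambda>z. if (x,w) = z then 1 else 0)"

lemma fs_eq: "fs xs = (\<lambda>z. sum_list (map (\<lambda>(c,x,w). c * dl x w z) xs))"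
  unfolding fs_def dl_def by (intro ext arg_cong[where f = sum_list] map_cong refl) auto

definition feq :: "nat \<Rightarrow> (complex mat \<times> complex mat set \<Rightarrow> complex) \<Rightarrow> (complex mat \<times> complex mat set \<Rightarrow> complex) \<Rightarrow> bool" where
  "feq N f g \<longleftrightarrow> (\<lambda>z. f z - g z) \<in> tzero N"

lemma teq_feq: "teq N xs ys \<longleftrightarrow> feq N (fs xs) (fs ys)"
  unfolding teq_def feq_def ..

lemma feq_refl: "feq N f f"
  unfolding feq_def using tzero.tz_zero by simp

lemma feq_sym: "feq N f g \<Longrightarrow> feq N g f"
  unfolding feq_def using tzero.tz_smult[of "\<lambda>z. f z - g z" N "-1"] by (simp add: algebra_simps)

lemma feq_trans: "feq N f g \<Longrightarrow> feq N g h \<Longrightarrow> feq N f h"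
  unfolding feq_def using tzero.tz_add[of "\<lambda>z. f z - g z" N "\<lambda>z. g z - h z"] by (simp add: algebra_simps)

lemma feq_add: "feq N f1 g1 \<Longrightarrow> feq N f2 g2 \<Longrightarrow> feq N (\<lambda>z. f1 z + f2 z) (\<lambda>z. g1 z + g2 z)"
  unfolding feq_def using tzero.tz_add[of "\<lambda>z. f1 z - g1 z" N "\<lambda>z. f2 z - g2 z"] by (simp add: algebra_simps)

lemma feq_smult: "feq N f g \<Longrightarrow> feq N (\<lambda>z. c * f z) (\<lambda>z. c * g z)"
  unfolding feq_def using tzero.tz_smult[of "\<lambda>z. f z - g z" N c] by (simp add: algebra_simps)

lemma feq_sum_list: "(\<And>x. x \<in> set xs \<Longrightarrow> feq N (F x) (G x)) \<Longrightarrow>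
  feq N (\<lambda>z. sum_list (map (\<lambda>x. F x z) xs)) (\<lambda>z. sum_list (map (\<lambda>x. G x z) xs))"
proof (induction xs)
  case Nil then show ?case using feq_refl by simp
next
  case (Cons a xs) then show ?case using feq_add[of N "F a" "G a"] by simp
qed

lemma feq_cong: "feq N f g \<Longrightarrow> f = f' \<Longrightarrow> g = g' \<Longrightarrow> feq N f' g'" by simp

lemma gen2:
  assumes "x \<in> Omega1 N" "u \<in> Sforms N" "v \<in> Sforms N"
  shows "feq N (dl x (om2 N (u + v))) (\<lambda>z. dl x (om2 N u) z + dl x (om2 N v) z)"
proof -
  have "[(1, x, om2 N (u + v)), (-1, x, om2 N u), (-1, x, om2 N v)] \<in> tgens N"
    unfolding tgens_def using assms by blast
  then have "fs [(1, x, om2 N (u + v)), (-1, x, om2 N u), (-1, x, om2 N v)] \<in> tzero N" by (rule tzero.tz_gen)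
  then show ?thesis unfolding feq_def fs_eq by (simp add: algebra_simps)
qed

lemma gen3:
  assumes "x \<in> Omega1 N" "W \<in> Omega2 N"
  shows "feq N (dl (c \<cdot>\<^sub>m x) W) (\<lambda>z. c * dl x W z)"
proof -
  have "[(1, c \<cdot>\<^sub>m x, W), (- c, x, W)] \<in> tgens N"
    unfolding tgens_def using assms by blast
  then have "fs [(1, c \<cdot>\<^sub>m x, W), (- c, x, W)] \<in> tzero N" by (rule tzero.tz_gen)
  then show ?thesis unfolding feq_def fs_eq by (simp add: algebra_simps)
qed

lemma gen4:
  assumes "x \<in> Omega1 N" "a \<in> AN N" "u \<in> Sforms N"
  shows "feq N (dl (x * amp a) (om2 N u)) (dl x (om2 N (amp a * u)))"
proof -
  have "[(1, x * amp a, om2 N u), (-1, x, om2 N (amp a * u))] \<in> tgens N"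
    unfolding tgens_def using assms by blast
  then have "fs [(1, x * amp a, om2 N u), (-1, x, om2 N (amp a * u))] \<in> tzero N" by (rule tzero.tz_gen)
  then show ?thesis unfolding feq_def fs_eq by (simp add: algebra_simps)
qed


lemma Omega1_formL: "set ps \<subseteq> AN N \<times> AN N \<Longrightarrow> formL N ps \<in> Omega1 N"
  unfolding Omega1_def formL_def by blast

lemma Omega1_carrier: "x \<in> Omega1 N \<Longrightarrow> x \<in> carrier_mat (hdim N) (hdim N)"
  unfolding Omega1_def using formL_carrier unfolding formL_def by blast

lemma amp_one: "amp (1\<^sub>m (dimK N)) = 1\<^sub>m (hdim N)"
  unfolding amp_def hdim_def
  by (rule eq_matI) (auto simp: kron2_entry, presburger+)

lemma amp_smult_one: "amp (c \<cdot>\<^sub>m 1\<^sub>m (dimK N)) = c \<cdot>\<^sub>m 1\<^sub>m (hdim N)"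
  unfolding amp_def hdim_def
  by (rule eq_matI) (auto simp: kron2_entry, presburger+)

lemma Sforms_junkL: assumes ps: "set ps \<subseteq> AN N \<times> AN N" shows "junkL N ps \<in> Sforms N"
proof -
  let ?ts = "map (\<lambda>(a,b). (1\<^sub>m (dimK N), a, b)) ps"
  have ts: "set ?ts \<subseteq> AN N \<times> AN N \<times> AN N" using ps by auto
  have "msum (hdim N) (map (\<lambda>(a0,a1,a2). amp a0 * cD N (amp a1) * cD N (amp a2)) ?ts) = junkL N ps"
    unfolding junkL_def map_map o_def
  proof (intro arg_cong[where f = "msum (hdim N)"] map_cong refl)
    fix p assume "p \<in> set ps"
    then obtain a b where p: "p = (a,b)" "a \<in> AN N" "b \<in> AN N" using ps by auto
    then show "(case case p of (a, b) \<Rightarrow> (1\<^sub>m (dimK N), a, b) of (a0, a1, a2) \<Rightarrow> amp a0 * cD N (amp a1) * cD N (amp a2)) =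
        (case p of (a, b) \<Rightarrow> cD N (amp a) * cD N (amp b))"
    proof -
      have "1\<^sub>m (hdim N) * cD N (amp a) = cD N (amp a)"
        using p(2) by (intro left_mult_one_mat[OF cD_carrier]) (simp add: AN_def)
      then show ?thesis using p by (simp add: amp_one)
    qed
  qed
  then show ?thesis unfolding Sforms_def using ts by (intro CollectI exI[of _ ?ts]) simp
qed

lemma Sforms_carrier: "u \<in> Sforms N \<Longrightarrow> u \<in> carrier_mat (hdim N) (hdim N)"
proof -
  assume "u \<in> Sforms N"
  then obtain ts where u: "u = msum (hdim N) (map (\<lambda>(a0,a1,a2). amp a0 * cD N (amp a1) * cD N (amp a2)) ts)"
    and ts: "set ts \<subseteq> AN N \<times> AN N \<times> AN N" unfolding Sforms_def by blast
  have "set (map (\<lambda>(a0,a1,a2). amp a0 * cD N (amp a1) * cD N (amp a2)) ts) \<subseteq> carrier_mat (hdim N) (hdim N)"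
  proof
    fix y assume "y \<in> set (map (\<lambda>(a0,a1,a2). amp a0 * cD N (amp a1) * cD N (amp a2)) ts)"
    then obtain a0 a1 a2 where y: "y = amp a0 * cD N (amp a1) * cD N (amp a2)" "(a0,a1,a2) \<in> set ts" by auto
    then have c: "a0 \<in> carrier_mat (dimK N) (dimK N)" "a1 \<in> carrier_mat (dimK N) (dimK N)" "a2 \<in> carrier_mat (dimK N) (dimK N)"
      using ts by (auto simp: AN_def)
    show "y \<in> carrier_mat (hdim N) (hdim N)" unfolding y(1)
      by (intro mult_carrier_mat[OF mult_carrier_mat[OF amp_carrier[OF c(1)] cD_carrier[OF c(2)]] cD_carrier[OF c(3)]])
  qed
  then show ?thesis unfolding u by (rule msum_carrier)
qed

lemma Omega2_om2: "u \<in> Sforms N \<Longrightarrow> om2 N u \<in> Omega2 N"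
  unfolding Omega2_def by blast

lemma wsc:
  assumes x: "x \<in> Omega1 N" and u: "u \<in> Sforms N"
  shows "feq N (dl x (om2 N (c \<cdot>\<^sub>m u))) (\<lambda>z. c * dl x (om2 N u) z)"
proof -
  have a: "c \<cdot>\<^sub>m 1\<^sub>m (dimK N) \<in> AN N" by (simp add: AN_def)
  have xc: "x \<in> carrier_mat (hdim N) (hdim N)" using Omega1_carrier[OF x] .
  have uc: "u \<in> carrier_mat (hdim N) (hdim N)" using Sforms_carrier[OF u] .
  have e1: "x * amp (c \<cdot>\<^sub>m 1\<^sub>m (dimK N)) = c \<cdot>\<^sub>m x"
    unfolding amp_smult_one using xc by (simp add: mult_smult_distrib[of _ "hdim N" "hdim N" _ "hdim N"])
  have e2: "amp (c \<cdot>\<^sub>m 1\<^sub>m (dimK N)) * u = c \<cdot>\<^sub>m u"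
    unfolding amp_smult_one using uc by (simp add: mult_smult_assoc_mat[of _ "hdim N" "hdim N" _ "hdim N"])
  have "feq N (dl (c \<cdot>\<^sub>m x) (om2 N u)) (dl x (om2 N (c \<cdot>\<^sub>m u)))"
    using gen4[OF x a u] unfolding e1 e2 .
  then show ?thesis using gen3[OF x Omega2_om2[OF u], of c] feq_sym feq_trans by blast
qed


definition Elist :: "nat \<Rightarrow> nat \<Rightarrow> (complex mat \<times> complex mat) list" where
  "Elist N l = LLs N (1\<^sub>m (dimK N)) (T l) @ LLs N (2 \<cdot>\<^sub>m Xop N l) Zt"

lemma X2_AN: "2 \<cdot>\<^sub>m Xop N l \<in> AN N" by (simp add: AN_def)

lemma Elist_AN: "set (Elist N l) \<subseteq> AN N \<times> AN N"
  unfolding Elist_def using LLs_AN[OF one_AN] LLs_AN[OF X2_AN] by auto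

lemma junk_Elist:
  assumes N: "N \<ge> 1" and l: "l \<in> {1,2,3}"
  shows "junkL N (Elist N l) = eb N l"
proof -
  have "junkL N (Elist N l) = (eb N l + amp ((-2) \<cdot>\<^sub>m Xop N l)) + amp (2 \<cdot>\<^sub>m Xop N l)"
    unfolding Elist_def junkL_append[OF LLs_AN[OF one_AN] LLs_AN[OF X2_AN]] junkT[OF N l] junkZ[OF N X2_AN] ..
  also have "\<dots> = eb N l"
  proof (rule eq_matI)
    fix I J assume "I < dim_row (eb N l)" "J < dim_col (eb N l)"
    then have IJ: "I < hdim N" "J < hdim N" using carrier_matD[OF eb_carrier] by auto
    have c: "(-2) \<cdot>\<^sub>m Xop N l \<in> carrier_mat (dimK N) (dimK N)" "2 \<cdot>\<^sub>m Xop N l \<in> carrier_mat (dimK N) (dimK N)" by auto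
    have ij: "I div 2 < dimK N" "J div 2 < dimK N" using IJ by (auto simp: hdim_def)
    show "(eb N l + amp ((-2) \<cdot>\<^sub>m Xop N l) + amp (2 \<cdot>\<^sub>m Xop N l)) $$ (I,J) = eb N l $$ (I,J)"
      using IJ ij carrier_matD[OF amp_carrier[OF c(1)]] carrier_matD[OF amp_carrier[OF c(2)]]
      by (simp add: amp_entry[OF c(1) IJ] amp_entry[OF c(2) IJ])
  qed (use carrier_matD[OF amp_carrier[OF X2_AN[unfolded AN_def]]] carrier_matD[OF eb_carrier] in auto)
  finally show ?thesis .
qed

lemma eb_S: "N \<ge> 1 \<Longrightarrow> l \<in> {1,2,3} \<Longrightarrow> eb N l \<in> Sforms N"
  using Sforms_junkL[OF Elist_AN] junk_Elist by metis

lemma eb_Omega1: "N \<ge> 1 \<Longrightarrow> l \<in> {1,2,3} \<Longrightarrow> eb N l \<in> Omega1 N"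
  using Omega1_formL[OF LLs_AN[OF one_AN]] formT by metis

definition cf :: "complex mat \<Rightarrow> nat \<Rightarrow> complex" where
  "cf M q = (if q = 1 then - \<i> * (M $$ (0,1) + M $$ (1,0)) / 2
     else if q = 2 then (M $$ (0,1) - M $$ (1,0)) / 2
     else - \<i> * (M $$ (0,0) - M $$ (1,1)) / 2)"


lemma Gl:
  assumes N: "N \<ge> 1" and x: "x \<in> Omega1 N" and M: "M \<in> carrier_mat 2 2" and b: "b \<in> AN N"
    and u: "u = kron2 (1\<^sub>m (dimK N)) M + amp b"
  shows "feq N (dl x (om2 N u)) (\<lambda>z. cf M 1 * dl x (om2 N (eb N 1)) z + (cf M 2 * dl x (om2 N (eb N 2)) z + cf M 3 * dl x (om2 N (eb N 3)) z))"
proof -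
  let ?L = "\<lambda>q. sc (cf M q) (Elist N q)"
  have LA: "set (?L q) \<subseteq> AN N \<times> AN N" for q using sc_AN[OF Elist_AN] .
  have jL: "junkL N (?L q) = cf M q \<cdot>\<^sub>m eb N q" if "q \<in> {1,2,3}" for q
    unfolding junkL_sc[OF Elist_AN] junk_Elist[OF N that] ..
  have L23: "set (?L 2 @ ?L 3) \<subseteq> AN N \<times> AN N" using LA by auto
  have v: "junkL N (?L 1 @ (?L 2 @ ?L 3)) = junkL N (?L 1) + (junkL N (?L 2) + junkL N (?L 3))"
    unfolding junkL_append[OF LA L23] junkL_append[OF LA LA] ..
  let ?v = "junkL N (?L 1 @ (?L 2 @ ?L 3))"
  have bc: "b \<in> carrier_mat (dimK N) (dimK N)" using b by (simp add: AN_def)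
  let ?al = "(M $$ (0,0) + M $$ (1,1)) / 2"
  let ?B = "b + ?al \<cdot>\<^sub>m 1\<^sub>m (dimK N)"
  have Bc: "?B \<in> carrier_mat (dimK N) (dimK N)" using bc by simp
  have uc: "u \<in> carrier_mat (hdim N) (hdim N)" unfolding u hdim_def using M bc by (simp add: amp_def)
  have vc: "?v \<in> carrier_mat (hdim N) (hdim N)"
    by (rule junkL_carrier) (use LA in auto)
  have uv: "u - ?v = amp ?B"
  proof (rule eq_matI)
    fix I J assume "I < dim_row (amp ?B)" "J < dim_col (amp ?B)"
    then have IJ: "I < hdim N" "J < hdim N" using carrier_matD[OF amp_carrier[OF Bc]] by auto
    have ij: "I div 2 < dimK N" "J div 2 < dimK N" using IJ by (auto simp: hdim_def)
    have ab: "I mod 2 < 2" "J mod 2 < 2" by auto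
    have ec: "cf M q \<cdot>\<^sub>m eb N q \<in> carrier_mat (hdim N) (hdim N)" for q by simp
    have ve: "?v $$ (I,J) = (\<Sum>q\<in>{1,2,3}. cf M q * (if I div 2 = J div 2 then sg q (I mod 2) (J mod 2) else 0))"
      unfolding v using IJ jL carrier_matD[OF ec] by (simp add: eb_entry)
    have ue: "u $$ (I,J) = (if I div 2 = J div 2 then M $$ (I mod 2, J mod 2) else 0) + (if I mod 2 = J mod 2 then b $$ (I div 2, J div 2) else 0)"
      unfolding u using IJ ij M bc carrier_matD[OF amp_carrier[OF bc]] by (simp add: kron2_entry amp_entry[OF bc IJ] hdim_def)
    have "(u - ?v) $$ (I,J) = u $$ (I,J) - ?v $$ (I,J)" using IJ carrier_matD[OF vc] by simp
    also have "\<dots> = amp ?B $$ (I,J)"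
      unfolding ue ve amp_entry[OF Bc IJ] using ij mod2_cases[of I] mod2_cases[of J] bc
      by (cases "I div 2 = J div 2"; elim disjE; simp add: cf_def sg_def field_simps)
    finally show "(u - ?v) $$ (I,J) = amp ?B $$ (I,J)" .
  qed (use vc carrier_matD[OF amp_carrier[OF Bc]] in auto)
  have ou: "om2 N u = om2 N ?v"
    by (rule om2_eq[OF uc vc]) (unfold uv, rule J2_amp[OF N], use Bc in \<open>simp add: AN_def\<close>)
  have S: "junkL N (?L q) \<in> Sforms N" for q using Sforms_junkL[OF LA] .
  have S23: "junkL N (?L 2 @ ?L 3) \<in> Sforms N" using Sforms_junkL[OF L23] .
  have f1: "feq N (dl x (om2 N ?v)) (\<lambda>z. dl x (om2 N (junkL N (?L 1))) z + dl x (om2 N (junkL N (?L 2 @ ?L 3))) z)"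
    unfolding junkL_append[OF LA L23] by (rule gen2[OF x S S23])
  have f2: "feq N (dl x (om2 N (junkL N (?L 2 @ ?L 3)))) (\<lambda>z. dl x (om2 N (junkL N (?L 2))) z + dl x (om2 N (junkL N (?L 3))) z)"
    unfolding junkL_append[OF LA LA] by (rule gen2[OF x S S])
  have f3: "feq N (dl x (om2 N (junkL N (?L q)))) (\<lambda>z. cf M q * dl x (om2 N (eb N q)) z)" if "q \<in> {1,2,3}" for q
    unfolding jL[OF that] by (rule wsc[OF x eb_S[OF N that]])
  have "feq N (dl x (om2 N ?v)) (\<lambda>z. cf M 1 * dl x (om2 N (eb N 1)) z + (cf M 2 * dl x (om2 N (eb N 2)) z + cf M 3 * dl x (om2 N (eb N 3)) z))"
    using feq_trans[OF f1 feq_add[OF f3 feq_trans[OF f2 feq_add[OF f3 f3]]]] by simp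
  then show ?thesis unfolding ou .
qed


lemma eb_dim[simp]: "dim_row (eb N l) = hdim N" "dim_col (eb N l) = hdim N"
  using carrier_matD[OF eb_carrier] by auto

definition Wm :: "nat \<Rightarrow> nat \<Rightarrow> complex mat" where
  "Wm i k = mat 2 2 (\<lambda>(a,b). - (eps i k 1 * sg 1 a b + eps i k 2 * sg 2 a b + eps i k 3 * sg 3 a b) / 2)"

lemma Wm_carrier[simp]: "Wm i k \<in> carrier_mat 2 2" by (simp add: Wm_def)

lemma kron2_one_entry: "M \<in> carrier_mat 2 2 \<Longrightarrow> I < hdim N \<Longrightarrow> J < hdim N \<Longrightarrow>
  kron2 (1\<^sub>m (dimK N)) M $$ (I,J) = (if I div 2 = J div 2 then M $$ (I mod 2, J mod 2) else 0)"
  by (subst kron2_entry) (auto simp: hdim_def)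

lemma kron2_one_carrier[simp]: "M \<in> carrier_mat 2 2 \<Longrightarrow> kron2 (1\<^sub>m (dimK N)) M \<in> carrier_mat (hdim N) (hdim N)"
  unfolding hdim_def by simp

lemma omega_kron: "omega N i k = kron2 (1\<^sub>m (dimK N)) (Wm i k)"
proof (rule eq_matI)
  fix I J assume "I < dim_row (kron2 (1\<^sub>m (dimK N)) (Wm i k))" "J < dim_col (kron2 (1\<^sub>m (dimK N)) (Wm i k))"
  then have IJ: "I < hdim N" "J < hdim N" by (auto simp: kron2_entry hdim_def)
  have c: "set [eps i k l \<cdot>\<^sub>m eb N l. l \<leftarrow> [1,2,3]] \<subseteq> carrier_mat (hdim N) (hdim N)" by auto
  have "omega N i k $$ (I,J) = - 1 / 2 * msum (hdim N) [eps i k l \<cdot>\<^sub>m eb N l. l \<leftarrow> [1,2,3]] $$ (I,J)"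
    unfolding omega_def using IJ msum_carrier[OF c] by simp
  also have "\<dots> = kron2 (1\<^sub>m (dimK N)) (Wm i k) $$ (I,J)"
    unfolding msum_entry[OF c IJ] kron2_one_entry[OF Wm_carrier IJ] using IJ
    by (simp add: eb_entry Wm_def field_simps)
  finally show "omega N i k $$ (I,J) = kron2 (1\<^sub>m (dimK N)) (Wm i k) $$ (I,J)" .
next
  have c: "set [eps i k l \<cdot>\<^sub>m eb N l. l \<leftarrow> [1,2,3]] \<subseteq> carrier_mat (hdim N) (hdim N)" by auto
  show "dim_row (omega N i k) = dim_row (kron2 (1\<^sub>m (dimK N)) (Wm i k))"
       "dim_col (omega N i k) = dim_col (kron2 (1\<^sub>m (dimK N)) (Wm i k))"
    unfolding omega_def using carrier_matD[OF msum_carrier[OF c]] by (simp_all add: kron2_entry hdim_def)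
qed

lemma Gl0:
  assumes N: "N \<ge> 1" and x: "x \<in> Omega1 N" and M: "M \<in> carrier_mat 2 2"
  shows "feq N (dl x (om2 N (kron2 (1\<^sub>m (dimK N)) M))) (\<lambda>z. cf M 1 * dl x (om2 N (eb N 1)) z + (cf M 2 * dl x (om2 N (eb N 2)) z + cf M 3 * dl x (om2 N (eb N 3)) z))"
proof -
  have z: "0\<^sub>m (dimK N) (dimK N) \<in> AN N" by (simp add: AN_def)
  have "kron2 (1\<^sub>m (dimK N)) M = kron2 (1\<^sub>m (dimK N)) M + amp (0\<^sub>m (dimK N) (dimK N))"
    using M by (intro eq_matI) (auto simp: amp_def kron2_entry)
  then show ?thesis using Gl[OF N x M z] by metis
qed

lemma omega_prod: "omega N i k * omega N k j = kron2 (1\<^sub>m (dimK N)) (Wm i k * Wm k j)"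
  unfolding omega_kron using kron2_mult[of "1\<^sub>m (dimK N)" "dimK N" "1\<^sub>m (dimK N)" "Wm i k" "Wm k j"] by simp

lemma eb_prod: "eb N p * eb N q = kron2 (1\<^sub>m (dimK N)) (sigma p * sigma q)"
  unfolding eb_def using kron2_mult[of "1\<^sub>m (dimK N)" "dimK N" "1\<^sub>m (dimK N)" "sigma p" "sigma q"] by simp

lemma F1: "N \<ge> 1 \<Longrightarrow> i \<in> {1,2,3} \<Longrightarrow> feq N (dl (eb N i) (wedge N (omega N i k) (omega N k j)))
   (\<lambda>z. cf (Wm i k * Wm k j) 1 * dl (eb N i) (om2 N (eb N 1)) z + (cf (Wm i k * Wm k j) 2 * dl (eb N i) (om2 N (eb N 2)) z + cf (Wm i k * Wm k j) 3 * dl (eb N i) (om2 N (eb N 3)) z))"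
  unfolding wedge_def omega_prod by (rule Gl0[OF _ eb_Omega1 mult_carrier_mat[OF Wm_carrier Wm_carrier]])

lemma F4: "N \<ge> 1 \<Longrightarrow> p \<in> {1,2,3} \<Longrightarrow> feq N (dl (eb N p) (wedge N (eb N p) (eb N j)))
   (\<lambda>z. cf (sigma p * sigma j) 1 * dl (eb N p) (om2 N (eb N 1)) z + (cf (sigma p * sigma j) 2 * dl (eb N p) (om2 N (eb N 2)) z + cf (sigma p * sigma j) 3 * dl (eb N p) (om2 N (eb N 3)) z))"
  unfolding wedge_def eb_prod by (rule Gl0[OF _ eb_Omega1 mult_carrier_mat[OF sigma_carrier sigma_carrier]])


definition Fm :: "nat \<Rightarrow> complex mat" where
  "Fm q = mat 2 2 (\<lambda>(a,b). - sg q a b)"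

lemma Fm_carrier[simp]: "Fm q \<in> carrier_mat 2 2" by (simp add: Fm_def)

lemma fb_kron:
  assumes q: "q \<in> {1,2,3}"
  shows "fb N q = om2 N (kron2 (1\<^sub>m (dimK N)) (Fm q))"
proof -
  let ?xs = "[eps q a b \<cdot>\<^sub>m (eb N a * eb N b). a \<leftarrow> [1,2,3], b \<leftarrow> [1,2,3]]"
  have c: "set ?xs \<subseteq> carrier_mat (hdim N) (hdim N)" by (auto intro!: smult_carrier_mat mult_carrier_mat[OF eb_carrier eb_carrier])
  have "(1/2) \<cdot>\<^sub>m msum (hdim N) ?xs = kron2 (1\<^sub>m (dimK N)) (Fm q)"
  proof (rule eq_matI)
    fix I J assume "I < dim_row (kron2 (1\<^sub>m (dimK N)) (Fm q))" "J < dim_col (kron2 (1\<^sub>m (dimK N)) (Fm q))"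
    then have IJ: "I < hdim N" "J < hdim N" by (auto simp: kron2_entry hdim_def)
    have e: "(eps q a b \<cdot>\<^sub>m (eb N a * eb N b)) $$ (I,J) = eps q a b * (if I div 2 = J div 2 then (sigma a * sigma b) $$ (I mod 2, J mod 2) else 0)" for a b
      using IJ unfolding eb_prod by (simp add: kron2_one_entry[OF mult_carrier_mat[OF sigma_carrier sigma_carrier] IJ] kron2_entry hdim_def del: index_mult_mat(1))
    have sm: "((1/2) \<cdot>\<^sub>m msum (hdim N) ?xs) $$ (I,J) = 1/2 * msum (hdim N) ?xs $$ (I,J)"
      using IJ carrier_matD[OF msum_carrier[OF c]] by (intro index_smult_mat(1)) auto
    have main: "1/2 * msum (hdim N) ?xs $$ (I,J) = (if I div 2 = J div 2 then Fm q $$ (I mod 2, J mod 2) else 0)"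
    proof (cases "I div 2 = J div 2")
      case False
      have "msum (hdim N) ?xs $$ (I,J) = 0" unfolding msum_entry[OF c IJ] using False by (simp add: e del: index_mult_mat(1))
      then show ?thesis using False by simp
    next
      case True
      have m: "msum (hdim N) ?xs $$ (I,J) = sum_list [eps q a b * (sigma a * sigma b) $$ (I mod 2, J mod 2). a \<leftarrow> [1,2,3], b \<leftarrow> [1,2,3]]"
        unfolding msum_entry[OF c IJ] using True by (simp add: e del: index_mult_mat(1))
      show ?thesis using True unfolding m
        using q mod2_cases[of I] mod2_cases[of J]
        by (elim disjE insertE emptyE; simp add: sigma_prod_entry Fm_def sg_def eps_def del: index_mult_mat(1))
    qed
    show "((1/2) \<cdot>\<^sub>m msum (hdim N) ?xs) $$ (I,J) = kron2 (1\<^sub>m (dimK N)) (Fm q) $$ (I,J)"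
      unfolding sm kron2_one_entry[OF Fm_carrier IJ] main ..
  qed (use carrier_matD[OF msum_carrier[OF c]] in \<open>auto simp: kron2_entry hdim_def\<close>)
  then show ?thesis unfolding fb_def by simp
qed

lemma F3: "N \<ge> 1 \<Longrightarrow> p \<in> {1,2,3} \<Longrightarrow> q \<in> {1,2,3} \<Longrightarrow> feq N (dl (eb N p) (fb N q))
   (\<lambda>z. cf (Fm q) 1 * dl (eb N p) (om2 N (eb N 1)) z + (cf (Fm q) 2 * dl (eb N p) (om2 N (eb N 2)) z + cf (Fm q) 3 * dl (eb N p) (om2 N (eb N 3)) z))"
  unfolding fb_kron by (rule Gl0[OF _ eb_Omega1 Fm_carrier])


definition TL :: "nat \<Rightarrow> nat \<Rightarrow> (complex mat \<times> complex mat) list" where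
  "TL N l = LLs N (1\<^sub>m (dimK N)) (T l)"

lemma TL_AN: "set (TL N l) \<subseteq> AN N \<times> AN N" unfolding TL_def by (rule LLs_AN[OF one_AN])

definition ps0 :: "nat \<Rightarrow> nat \<Rightarrow> nat \<Rightarrow> (complex mat \<times> complex mat) list" where
  "ps0 N k j = sc (- eps k j 1 / 2) (TL N 1) @ (sc (- eps k j 2 / 2) (TL N 2) @ sc (- eps k j 3 / 2) (TL N 3))"

lemma ps0_AN: "set (ps0 N k j) \<subseteq> AN N \<times> AN N"
  unfolding ps0_def using sc_AN[OF TL_AN] by auto

lemma Wm_entry: "a < 2 \<Longrightarrow> b < 2 \<Longrightarrow> Wm i k $$ (a,b) = - (eps i k 1 * sg 1 a b + eps i k 2 * sg 2 a b + eps i k 3 * sg 3 a b) / 2"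
  unfolding Wm_def by simp

lemma form_ps0:
  assumes N: "N \<ge> 1"
  shows "formL N (ps0 N k j) = omega N k j"
proof -
  have A: "set (sc c (TL N l)) \<subseteq> AN N \<times> AN N" for c l using sc_AN[OF TL_AN] .
  have A2: "set (sc c (TL N l) @ sc c' (TL N l')) \<subseteq> AN N \<times> AN N" for c l c' l' using A by auto
  have fT: "formL N (sc c (TL N l)) = c \<cdot>\<^sub>m eb N l" if "l \<in> {1,2,3}" for c l
    unfolding formL_sc[OF TL_AN] unfolding TL_def formT[OF N that] ..
  have "formL N (ps0 N k j) = (- eps k j 1 / 2) \<cdot>\<^sub>m eb N 1 + ((- eps k j 2 / 2) \<cdot>\<^sub>m eb N 2 + (- eps k j 3 / 2) \<cdot>\<^sub>m eb N 3)"
    unfolding ps0_def formL_append[OF A A2] formL_append[OF A A] by (simp add: fT)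
  also have "\<dots> = omega N k j"
  proof (rule eq_matI)
    fix I J assume "I < dim_row (omega N k j)" "J < dim_col (omega N k j)"
    then have IJ: "I < hdim N" "J < hdim N" unfolding omega_kron by (auto simp: kron2_entry hdim_def)
    show "((- eps k j 1 / 2) \<cdot>\<^sub>m eb N 1 + ((- eps k j 2 / 2) \<cdot>\<^sub>m eb N 2 + (- eps k j 3 / 2) \<cdot>\<^sub>m eb N 3)) $$ (I,J) = omega N k j $$ (I,J)"
      unfolding omega_kron kron2_one_entry[OF Wm_carrier IJ] using IJ
      by (simp add: eb_entry Wm_entry field_simps)
  qed (auto simp: omega_kron kron2_entry hdim_def)
  finally show ?thesis .
qed

lemma junk_ps0:
  assumes N: "N \<ge> 1"
  shows "junkL N (ps0 N k j) = kron2 (1\<^sub>m (dimK N)) (Wm k j) +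
     amp ((- eps k j 1 / 2) \<cdot>\<^sub>m ((-2) \<cdot>\<^sub>m Xop N 1) + ((- eps k j 2 / 2) \<cdot>\<^sub>m ((-2) \<cdot>\<^sub>m Xop N 2) + (- eps k j 3 / 2) \<cdot>\<^sub>m ((-2) \<cdot>\<^sub>m Xop N 3)))"
    (is "_ = _ + amp ?B")
proof -
  have A: "set (sc c (TL N l)) \<subseteq> AN N \<times> AN N" for c l using sc_AN[OF TL_AN] .
  have A2: "set (sc c (TL N l) @ sc c' (TL N l')) \<subseteq> AN N \<times> AN N" for c l c' l' using A by auto
  have jT: "junkL N (sc c (TL N l)) = c \<cdot>\<^sub>m (eb N l + amp ((-2) \<cdot>\<^sub>m Xop N l))" if "l \<in> {1,2,3}" for c l
    unfolding junkL_sc[OF TL_AN] unfolding TL_def junkT[OF N that] ..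
  have "junkL N (ps0 N k j) = (- eps k j 1 / 2) \<cdot>\<^sub>m (eb N 1 + amp ((-2) \<cdot>\<^sub>m Xop N 1))
      + ((- eps k j 2 / 2) \<cdot>\<^sub>m (eb N 2 + amp ((-2) \<cdot>\<^sub>m Xop N 2)) + (- eps k j 3 / 2) \<cdot>\<^sub>m (eb N 3 + amp ((-2) \<cdot>\<^sub>m Xop N 3)))"
    unfolding ps0_def junkL_append[OF A A2] junkL_append[OF A A] by (simp add: jT)
  also have "\<dots> = kron2 (1\<^sub>m (dimK N)) (Wm k j) + amp ?B"
  proof (rule eq_matI)
    have Bc: "?B \<in> carrier_mat (dimK N) (dimK N)" by simp
    have Xc: "(-2) \<cdot>\<^sub>m Xop N l \<in> carrier_mat (dimK N) (dimK N)" for l by simp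
    fix I J assume "I < dim_row (kron2 (1\<^sub>m (dimK N)) (Wm k j) + amp ?B)" "J < dim_col (kron2 (1\<^sub>m (dimK N)) (Wm k j) + amp ?B)"
    then have IJ: "I < hdim N" "J < hdim N" using carrier_matD[OF amp_carrier[OF Bc]] by auto
    have ij: "I div 2 < dimK N" "J div 2 < dimK N" using IJ by (auto simp: hdim_def)
    show "((- eps k j 1 / 2) \<cdot>\<^sub>m (eb N 1 + amp ((-2) \<cdot>\<^sub>m Xop N 1))
      + ((- eps k j 2 / 2) \<cdot>\<^sub>m (eb N 2 + amp ((-2) \<cdot>\<^sub>m Xop N 2)) + (- eps k j 3 / 2) \<cdot>\<^sub>m (eb N 3 + amp ((-2) \<cdot>\<^sub>m Xop N 3)))) $$ (I,J)
      = (kron2 (1\<^sub>m (dimK N)) (Wm k j) + amp ?B) $$ (I,J)"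
      using IJ ij carrier_matD[OF amp_carrier[OF Bc]] carrier_matD[OF amp_carrier[OF Xc]]
      by (simp add: eb_entry amp_entry[of _ N] kron2_one_entry[OF Wm_carrier IJ] Wm_entry field_simps)
  qed (auto simp: amp_def kron2_entry hdim_def)
  finally show ?thesis .
qed

lemma F2: "N \<ge> 1 \<Longrightarrow> k \<in> {1,2,3} \<Longrightarrow> feq N (dl (eb N k) (dform N (omega N k j)))
   (\<lambda>z. cf (Wm k j) 1 * dl (eb N k) (om2 N (eb N 1)) z + (cf (Wm k j) 2 * dl (eb N k) (om2 N (eb N 2)) z + cf (Wm k j) 3 * dl (eb N k) (om2 N (eb N 3)) z))"
  unfolding dform_eq[OF ps0_AN form_ps0[symmetric]]
  by (rule Gl[OF _ eb_Omega1 Wm_carrier _ junk_ps0]) (auto simp: AN_def)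


definition NF :: "nat \<Rightarrow> nat \<Rightarrow> (nat \<Rightarrow> complex) \<Rightarrow> (complex mat \<times> complex mat set \<Rightarrow> complex)" where
  "NF N p c = (\<lambda>z. c 1 * dl (eb N p) (om2 N (eb N 1)) z + (c 2 * dl (eb N p) (om2 N (eb N 2)) z + c 3 * dl (eb N p) (om2 N (eb N 3)) z))"

lemma mat2_mult_entry: "A \<in> carrier_mat 2 2 \<Longrightarrow> B \<in> carrier_mat 2 2 \<Longrightarrow> a < 2 \<Longrightarrow> b < 2 \<Longrightarrow>
  (A * B) $$ (a,b) = A $$ (a,0) * B $$ (0,b) + A $$ (a,1) * B $$ (1,b)"
  by (subst mult_entry) (auto simp: numeral_2_eq_2)

lemma cfW: "cf (Wm i k * Wm k j) q = (if q = 1 then - \<i> * ((Wm i k * Wm k j) $$ (0,1) + (Wm i k * Wm k j) $$ (1,0)) / 2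
     else if q = 2 then ((Wm i k * Wm k j) $$ (0,1) - (Wm i k * Wm k j) $$ (1,0)) / 2
     else - \<i> * ((Wm i k * Wm k j) $$ (0,0) - (Wm i k * Wm k j) $$ (1,1)) / 2)"
  unfolding cf_def ..

lemma fs_append: "fs (xs @ ys) = (\<lambda>z. fs xs z + fs ys z)"
  unfolding fs_eq by simp

lemma feq_map:
  assumes "\<And>y. y \<in> set ys \<Longrightarrow> feq N (dl (fst (snd (f y))) (snd (snd (f y)))) (G y)"
  shows "feq N (fs (map f ys)) (\<lambda>z. sum_list (map (\<lambda>y. fst (f y) * G y z) ys))"
proof -
  have "fs (map f ys) = (\<lambda>z. sum_list (map (\<lambda>y. fst (f y) * dl (fst (snd (f y))) (snd (snd (f y))) z) ys))"
    unfolding fs_eq map_map o_def by (intro ext arg_cong[where f = sum_list] map_cong refl) (auto split: prod.split)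
  then show ?thesis using feq_sum_list[of ys N "\<lambda>y z. fst (f y) * dl (fst (snd (f y))) (snd (snd (f y))) z" "\<lambda>y z. fst (f y) * G y z"]
    assms feq_smult by auto
qed

definition KI :: "(nat \<times> nat) list" where
  "KI = concat (map (\<lambda>k. map (\<lambda>i. (k,i)) [1,2,3]) [1,2,3])"

definition TNF :: "nat \<Rightarrow> nat \<Rightarrow> (complex mat \<times> complex mat set \<Rightarrow> complex)" where
  "TNF N j = (\<lambda>z. sum_list (map (\<lambda>p. sum_list (map (\<lambda>q. 1/4 * eps j p q * dl (eb N p) (om2 N (eb N q)) z) [1,2,3])) [1,2,3]))"

lemma KI_set: "y \<in> set KI \<Longrightarrow> fst y \<in> {1,2,3} \<and> snd y \<in> {1,2,3}"
  unfolding KI_def by auto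

lemma curv_eq: "curv N j = map (\<lambda>y. (1, eb N (snd y), wedge N (omega N (snd y) (fst y)) (omega N (fst y) j))) KI @
    map (\<lambda>k. (1, eb N k, dform N (omega N k j))) [1,2,3]"
  by (simp add: curv_def idwedge_def nabla_def KI_def)

lemma curv_TNF:
  assumes N: "N \<ge> 1" and j: "j \<in> {1,2,3}"
  shows "feq N (fs (curv N j)) (TNF N j)"
proof -
  have a: "feq N (fs (map (\<lambda>y. (1, eb N (snd y), wedge N (omega N (snd y) (fst y)) (omega N (fst y) j))) KI))
     (\<lambda>z. sum_list (map (\<lambda>y. fst ((\<lambda>y. (1::complex, eb N (snd y), wedge N (omega N (snd y) (fst y)) (omega N (fst y) j))) y) *
         NF N (snd y) (cf (Wm (snd y) (fst y) * Wm (fst y) j)) z) KI))"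
  proof (rule feq_map)
    fix y assume y: "y \<in> set KI"
    obtain k i where y': "y = (k,i)" by force
    show "feq N (dl (fst (snd ((\<lambda>y. (1::complex, eb N (snd y), wedge N (omega N (snd y) (fst y)) (omega N (fst y) j))) y)))
       (snd (snd ((\<lambda>y. (1::complex, eb N (snd y), wedge N (omega N (snd y) (fst y)) (omega N (fst y) j))) y))))
      (NF N (snd y) (cf (Wm (snd y) (fst y) * Wm (fst y) j)))"
      using F1[OF N, of i k j] KI_set[OF y] unfolding y' NF_def by simp
  qed
  have b: "feq N (fs (map (\<lambda>k. (1::complex, eb N k, dform N (omega N k j))) [1,2,3]))
     (\<lambda>z. sum_list (map (\<lambda>y. fst ((\<lambda>k. (1::complex, eb N k, dform N (omega N k j))) y) * NF N y (cf (Wm y j)) z) [1,2,3]))"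
  proof (rule feq_map)
    fix y :: nat assume y: "y \<in> set [1,2,3]"
    show "feq N (dl (fst (snd ((\<lambda>k. (1::complex, eb N k, dform N (omega N k j))) y)))
       (snd (snd ((\<lambda>k. (1::complex, eb N k, dform N (omega N k j))) y)))) (NF N y (cf (Wm y j)))"
      using F2[OF N, of y j] y unfolding NF_def by simp
  qed
  have c: "feq N (fs (curv N j)) (\<lambda>z. sum_list (map (\<lambda>y. NF N (snd y) (cf (Wm (snd y) (fst y) * Wm (fst y) j)) z) KI)
     + sum_list (map (\<lambda>k. NF N k (cf (Wm k j)) z) [1,2,3]))"
    using feq_add[OF a b] unfolding curv_eq fs_append by simp
  have e: "(\<lambda>z. sum_list (map (\<lambda>y. NF N (snd y) (cf (Wm (snd y) (fst y) * Wm (fst y) j)) z) KI)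
     + sum_list (map (\<lambda>k. NF N k (cf (Wm k j)) z) [1,2,3])) = TNF N j"
  proof -
    have "j = 1 \<or> j = 2 \<or> j = 3" using j by auto
    then show ?thesis
    proof (elim disjE)
      assume "j = 1" then show ?thesis
        unfolding KI_def TNF_def by (intro ext) (simp add: NF_def cf_def mat2_mult_entry Wm_entry eps_def sg_def field_simps del: index_mult_mat(1))
    next
      assume "j = 2" then show ?thesis
        unfolding KI_def TNF_def by (intro ext) (simp add: NF_def cf_def mat2_mult_entry Wm_entry eps_def sg_def field_simps del: index_mult_mat(1))
    next
      assume "j = 3" then show ?thesis
        unfolding KI_def TNF_def by (intro ext) (simp add: NF_def cf_def mat2_mult_entry Wm_entry eps_def sg_def field_simps del: index_mult_mat(1))
    qed
  qed
  show ?thesis using c unfolding e .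
qed


lemma T1_TNF:
  assumes N: "N \<ge> 1" and j: "j \<in> {1,2,3}"
  shows "feq N (fs [(- 1 / 4 * eps j p q, eb N p, fb N q). p \<leftarrow> [1,2,3], q \<leftarrow> [1,2,3]]) (TNF N j)"
proof -
  have l: "[(- 1 / 4 * eps j p q, eb N p, fb N q). p \<leftarrow> [1,2,3], q \<leftarrow> [1,2,3]] =
     map (\<lambda>y. (- 1 / 4 * eps j (fst y) (snd y), eb N (fst y), fb N (snd y))) KI"
    by (simp add: KI_def)
  have a: "feq N (fs (map (\<lambda>y. (- 1 / 4 * eps j (fst y) (snd y), eb N (fst y), fb N (snd y))) KI))
     (\<lambda>z. sum_list (map (\<lambda>y. fst ((\<lambda>y. (- 1 / 4 * eps j (fst y) (snd y), eb N (fst y), fb N (snd y))) y) *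
         NF N (fst y) (cf (Fm (snd y))) z) KI))"
  proof (rule feq_map)
    fix y assume y: "y \<in> set KI"
    show "feq N (dl (fst (snd ((\<lambda>y. (- 1 / 4 * eps j (fst y) (snd y), eb N (fst y), fb N (snd y))) y)))
       (snd (snd ((\<lambda>y. (- 1 / 4 * eps j (fst y) (snd y), eb N (fst y), fb N (snd y))) y))))
      (NF N (fst y) (cf (Fm (snd y))))"
      using F3[OF N, of "fst y" "snd y"] KI_set[OF y] unfolding NF_def by simp
  qed
  have e: "(\<lambda>z. sum_list (map (\<lambda>y. fst ((\<lambda>y. (- 1 / 4 * eps j (fst y) (snd y), eb N (fst y), fb N (snd y))) y) *
         NF N (fst y) (cf (Fm (snd y))) z) KI)) = TNF N j"
  proof -
    have "j = 1 \<or> j = 2 \<or> j = 3" using j by auto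
    then show ?thesis
    proof (elim disjE)
      assume "j = 1" then show ?thesis
        unfolding KI_def TNF_def by (intro ext) (simp add: NF_def cf_def Fm_def eps_def sg_def field_simps)
    next
      assume "j = 2" then show ?thesis
        unfolding KI_def TNF_def by (intro ext) (simp add: NF_def cf_def Fm_def eps_def sg_def field_simps)
    next
      assume "j = 3" then show ?thesis
        unfolding KI_def TNF_def by (intro ext) (simp add: NF_def cf_def Fm_def eps_def sg_def field_simps)
    qed
  qed
  show ?thesis using a unfolding l e .
qed

lemma T2_TNF:
  assumes N: "N \<ge> 1" and j: "j \<in> {1,2,3}"
  shows "feq N (fs [(1 / 4, eb N p, wedge N (eb N p) (eb N j)). p \<leftarrow> [1,2,3]]) (TNF N j)"
proof -
  have a: "feq N (fs (map (\<lambda>p. (1 / 4, eb N p, wedge N (eb N p) (eb N j))) [1,2,3]))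
     (\<lambda>z. sum_list (map (\<lambda>p. fst ((\<lambda>p. (1 / 4 :: complex, eb N p, wedge N (eb N p) (eb N j))) p) *
         NF N p (cf (sigma p * sigma j)) z) [1,2,3]))"
  proof (rule feq_map)
    fix p :: nat assume p: "p \<in> set [1,2,3]"
    show "feq N (dl (fst (snd ((\<lambda>p. (1 / 4 :: complex, eb N p, wedge N (eb N p) (eb N j))) p)))
       (snd (snd ((\<lambda>p. (1 / 4 :: complex, eb N p, wedge N (eb N p) (eb N j))) p))))
      (NF N p (cf (sigma p * sigma j)))"
      using F4[OF N, of p j] p unfolding NF_def by simp
  qed
  have e: "(\<lambda>z. sum_list (map (\<lambda>p. fst ((\<lambda>p. (1 / 4 :: complex, eb N p, wedge N (eb N p) (eb N j))) p) *
         NF N p (cf (sigma p * sigma j)) z) [1,2,3])) = TNF N j"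
  proof -
    have "j = 1 \<or> j = 2 \<or> j = 3" using j by auto
    then show ?thesis
    proof (elim disjE)
      assume "j = 1" then show ?thesis
        unfolding TNF_def by (intro ext) (simp add: NF_def cf_def mat2_mult_entry sigma_entry eps_def sg_def field_simps del: index_mult_mat(1))
    next
      assume "j = 2" then show ?thesis
        unfolding TNF_def by (intro ext) (simp add: NF_def cf_def mat2_mult_entry sigma_entry eps_def sg_def field_simps del: index_mult_mat(1))
    next
      assume "j = 3" then show ?thesis
        unfolding TNF_def by (intro ext) (simp add: NF_def cf_def mat2_mult_entry sigma_entry eps_def sg_def field_simps del: index_mult_mat(1))
    qed
  qed
  show ?thesis using a unfolding e by simp
qed

theorem proposition8p8:
  fixes N j :: nat
  assumes "N \<ge> 1" and "j \<in> {1, 2, 3}"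
  shows "teq N (curv N j)
           [(- 1 / 4 * eps j p q, eb N p, fb N q). p \<leftarrow> [1,2,3], q \<leftarrow> [1,2,3]]
       \<and> teq N [(- 1 / 4 * eps j p q, eb N p, fb N q). p \<leftarrow> [1,2,3], q \<leftarrow> [1,2,3]]
           [(1 / 4, eb N p, wedge N (eb N p) (eb N j)). p \<leftarrow> [1,2,3]]"
  unfolding teq_feq
  using feq_trans[OF curv_TNF[OF assms] feq_sym[OF T1_TNF[OF assms]]]
    feq_trans[OF T1_TNF[OF assms] feq_sym[OF T2_TNF[OF assms]]] by blast


end
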